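(* Let $d\ge3$ and let $\phi(x,t;y)=\langle x,y\rangle+\psi(t;y)$ be a translation-invariant phase on $\mathbb{B}^{d-1}_{\varepsilon_0}\times\mathbb{B}^1_{\varepsilon_0}\times\mathbb{B}^{d-1}_{\varepsilon_0}$ satisfying $(H_1),(H_2)$ and Bourgain's condition at every point. Then there exist smooth functions $c:(-\varepsilon_0,\varepsilon_0)\to\mathbb{R}$ and $\mathbf B:(-\varepsilon_0,\varepsilon_0)\to\mathbb{R}^{d-1}$ such that, with $T(x,t)=(x+\mathbf B(t),t)$, one has $\phi(T(x,t);y)=\langle x,y\rangle+\tilde\psi(t;y)$ where $\tilde\psi(t;y)=\mathbf B(t)\cdot y+\psi(t;y)$ satisfies $$\partial_t^2\nabla_y\tilde\psi(t;y)=c(t)\,\partial_t\nabla_y\tilde\psi(t;y)$$ for all $(t,y)\in(-\varepsilon_0,\varepsilon_0)\times\mathbb{B}^{d-1}_{\varepsilon_0}$.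
   Context: Coordinates: $\mathbf x=(x,t)\in\mathbb{B}^{d-1}_{\varepsilon_0}\times\mathbb{B}^1_{\varepsilon_0}$, $y\in\mathbb{B}^{d-1}_{\varepsilon_0}$, $\mathbb{B}^k_r$ the $k$-dimensional ball of radius $r$ centered at $0$, $\varepsilon_0>0$ small depending on $\phi$; $\phi$ is smooth. Hörmander's conditions: $(H_1)$ $\mathrm{rank}\,\nabla_{\mathbf x}\nabla_y\phi(\mathbf x;y)=d-1$ everywhere; $(H_2)$ with $G_0(\mathbf x;y)=\bigwedge_{j=1}^{d-1}\partial_{y_j}\nabla_{\mathbf x}\phi(\mathbf x;y)$ (identified with a vector of $\mathbb{R}^d$), one has $\det\nabla^2_y\langle\nabla_{\mathbf x}\phi(\mathbf x;y),G_0(\mathbf x;y_0)\rangle|_{y=y_0}\ne0$. Translation-invariant: $\phi(x,t;y)=\langle x,y\rangle+\psi(t;y)$ with $\psi$ smooth, $\psi(0;y)=0$. Bourgain's condition at $(\mathbf x_0;y_0)$: there is a scalar $C(\mathbf x_0;y_0)$ with $(G_0\cdot\nabla_{\mathbf x})^2\partial^2_{y_iy_j}\phi(\mathbf x_0;y_0)=C(\mathbf x_0;y_0)(G_0\cdot\nabla_{\mathbf x})\partial^2_{y_iy_j}\phi(\mathbf x_0;y_0)$ for all $i,j$, where $G_0=G_0(\mathbf x;y_0)$ is a vector field in $\mathbf x$. *)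

theory Defs
  imports "HOL-Analysis.Analysis"
begin

definition pd :: "('a::real_normed_vector \<Rightarrow> real) \<Rightarrow> 'a \<Rightarrow> 'a \<Rightarrow> real" where
  "pd f v x = deriv (\<lambda>s. f (x + s *\<^sub>R v)) 0"

fun iter_pd :: "('a::real_normed_vector \<Rightarrow> real) \<Rightarrow> 'a list \<Rightarrow> 'a \<Rightarrow> real" where
  "iter_pd f [] = f"
| "iter_pd f (v # vs) = pd (iter_pd f vs) v"

definition smooth_on :: "'a::euclidean_space set \<Rightarrow> ('a \<Rightarrow> real) \<Rightarrow> bool" where
  "smooth_on S f \<longleftrightarrow>
     (\<forall>vs. set vs \<subseteq> Basis \<longrightarrow>
        continuous_on S (iter_pd f vs) \<and>
        (\<forall>v\<in>Basis. \<forall>x\<in>S. (\<lambda>s. iter_pd f vs (x + s *\<^sub>R v)) differentiable (at 0)))"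

text \<open>Phases phi(X;y) with X in R^d (indexed by 'n option; None is the t-coordinate)
  and y in R^(d-1) (indexed by 'n).\<close>

definition mixed_hess :: "(real^'n option \<Rightarrow> real^'n \<Rightarrow> real) \<Rightarrow> real^'n option \<Rightarrow> real^'n
     \<Rightarrow> real^'n^('n::finite) option" where
  "mixed_hess \<phi> X y = (\<chi> k j. pd (\<lambda>X'. pd (\<lambda>y'. \<phi> X' y') (axis j 1) y) (axis k 1) X)"

definition gradX :: "(real^'n option \<Rightarrow> real^'n \<Rightarrow> real) \<Rightarrow> real^'n option \<Rightarrow> real^'n
     \<Rightarrow> real^('n::finite) option" where
  "gradX \<phi> X y = (\<chi> k. pd (\<lambda>X'. \<phi> X' y) (axis k 1) X)"

text \<open>Wedge product of the d-1 columns of a d x (d-1) matrix, identified with a vector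
  of R^d via  <v_1 ^ ... ^ v_{d-1}, w> = det(v_1,...,v_{d-1},w).\<close>
definition wedge_cols :: "real^'n^('n::finite) option \<Rightarrow> real^'n option" where
  "wedge_cols M = (\<chi> k. det (\<chi> r c. case c of Some j \<Rightarrow> M $ r $ j | None \<Rightarrow> axis k (1::real) $ r))"

definition G0 :: "(real^'n option \<Rightarrow> real^'n \<Rightarrow> real) \<Rightarrow> real^'n option \<Rightarrow> real^'n
     \<Rightarrow> real^('n::finite) option" where
  "G0 \<phi> X y = wedge_cols (mixed_hess \<phi> X y)"

definition H1 :: "(real^'n option \<Rightarrow> real^'n \<Rightarrow> real) \<Rightarrow> real^'n option \<Rightarrow> real^('n::finite) \<Rightarrow> bool" where
  "H1 \<phi> X y \<longleftrightarrow> rank (mixed_hess \<phi> X y) = CARD('n)"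

definition H2 :: "(real^'n option \<Rightarrow> real^'n \<Rightarrow> real) \<Rightarrow> real^'n option \<Rightarrow> real^('n::finite) \<Rightarrow> bool" where
  "H2 \<phi> X y0 \<longleftrightarrow>
     det (\<chi> i j. pd (\<lambda>y'. pd (\<lambda>y''. gradX \<phi> X y'' \<bullet> G0 \<phi> X y0) (axis j 1) y') (axis i 1) y0)
       \<noteq> (0::real)"

definition G0_deriv :: "(real^'n option \<Rightarrow> real^'n \<Rightarrow> real) \<Rightarrow> real^('n::finite)
     \<Rightarrow> (real^'n option \<Rightarrow> real) \<Rightarrow> real^'n option \<Rightarrow> real" where
  "G0_deriv \<phi> y0 g X = (\<Sum>k\<in>UNIV. G0 \<phi> X y0 $ k * pd g (axis k 1) X)"

definition bourgain_cond :: "(real^'n option \<Rightarrow> real^'n \<Rightarrow> real) \<Rightarrow> real^'n option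
     \<Rightarrow> real^('n::finite) \<Rightarrow> bool" where
  "bourgain_cond \<phi> X0 y0 \<longleftrightarrow>
     (\<exists>C::real. \<forall>i j.
        let f = (\<lambda>X. pd (\<lambda>y'. pd (\<lambda>y''. \<phi> X y'') (axis j 1) y') (axis i 1) y0) in
        G0_deriv \<phi> y0 (G0_deriv \<phi> y0 f) X0 = C * G0_deriv \<phi> y0 f X0)"

definition xt :: "real^'n \<Rightarrow> real \<Rightarrow> real^('n::finite) option" where
  "xt x t = (\<chi> k. case k of None \<Rightarrow> t | Some j \<Rightarrow> x $ j)"

definition ti_phase :: "(real \<Rightarrow> real^'n \<Rightarrow> real) \<Rightarrow> real^'n option \<Rightarrow> real^('n::finite) \<Rightarrow> real" where
  "ti_phase \<psi> X y = (\<chi> j. X $ Some j) \<bullet> y + \<psi> (X $ None) y"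

end

theory Submission imports Defs begin

lemma deriv_shift0: "deriv f t = deriv (\<lambda>s. f (t + s)) 0"
proof -
  have "\<And>D. (f has_field_derivative D) (at t) \<longleftrightarrow> ((\<lambda>s. f (t + s)) has_field_derivative D) (at 0)"
    using DERIV_shift[of f _ 0 t] by (simp add: add.commute)
  thus ?thesis unfolding deriv_def by simp
qed

lemma diff_shift0: "(f::real\<Rightarrow>real) differentiable (at t) \<longleftrightarrow> (\<lambda>s. f (t + s)) differentiable (at 0)"
  unfolding real_differentiable_def using DERIV_shift[of f _ 0 t] by (simp add: add.commute)

lemma ev_line:
  fixes x v :: "'a::real_normed_vector"
  assumes "open N" "x \<in> N"
  shows "\<forall>\<^sub>F s in nhds (0::real). x + s *\<^sub>R v \<in> N"
proof -
  have "((\<lambda>s::real. x + s *\<^sub>R v) \<longlongrightarrow> x + 0 *\<^sub>R v) (nhds 0)"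
    by (intro tendsto_intros) (simp add: filterlim_ident)
  then show ?thesis using assms by (auto intro: topological_tendstoD)
qed

lemma pd_cong:
  assumes "open N" "x \<in> N" "\<And>z. z \<in> N \<Longrightarrow> f z = g z"
  shows "pd f v x = pd g v x"
  unfolding pd_def
  by (rule deriv_cong_ev) (auto intro: eventually_mono[OF ev_line[OF assms(1,2)]] assms(3))

lemma pd_has:
  assumes "(\<lambda>s. f (x + s *\<^sub>R v)) differentiable (at 0)"
  shows "((\<lambda>s. f (x + s *\<^sub>R v)) has_field_derivative pd f v x) (at 0)"
  using assms unfolding pd_def by (simp add: DERIV_deriv_iff_real_differentiable)

lemma pd_line:
  assumes "(\<lambda>s. f ((x + r *\<^sub>R v) + s *\<^sub>R v)) differentiable (at 0)"
  shows "((\<lambda>s. f (x + s *\<^sub>R v)) has_field_derivative pd f v (x + r *\<^sub>R v)) (at r)"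
proof -
  have "((\<lambda>s. f ((x + r *\<^sub>R v) + s *\<^sub>R v)) has_field_derivative pd f v (x + r *\<^sub>R v)) (at 0)"
    by (rule pd_has[OF assms])
  then have "((\<lambda>s. f (x + (s + r) *\<^sub>R v)) has_field_derivative pd f v (x + r *\<^sub>R v)) (at 0)"
    by (simp add: algebra_simps)
  then show ?thesis using DERIV_shift[of "\<lambda>s. f (x + s *\<^sub>R v)" _ 0 r] by simp
qed

lemma deriv_add_const: "deriv (\<lambda>s. c + g s) x = deriv g x"
proof -
  have "\<And>D. ((\<lambda>s. c + g s) has_field_derivative D) (at x) \<longleftrightarrow> (g has_field_derivative D) (at x)"
  proof
    fix D assume "((\<lambda>s. c + g s) has_field_derivative D) (at x)"
    from DERIV_add[OF this DERIV_const[of "-c"]] show "(g has_field_derivative D) (at x)" by simp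
  next
    fix D assume "(g has_field_derivative D) (at x)"
    from DERIV_add[OF DERIV_const[of c] this] show "((\<lambda>s. c + g s) has_field_derivative D) (at x)" by simp
  qed
  thus ?thesis unfolding deriv_def by simp
qed

lemma deriv_lin_plus:
  assumes "g differentiable (at 0)"
  shows "deriv (\<lambda>s::real. a + s * b + g s) 0 = b + deriv g 0"
proof -
  have "(g has_field_derivative deriv g 0) (at 0)" using assms
    by (simp add: DERIV_deriv_iff_real_differentiable)
  then have "((\<lambda>s::real. a + s * b + g s) has_field_derivative b + deriv g 0) (at 0)"
    by (auto intro!: derivative_eq_intros)
  then show ?thesis by (rule DERIV_imp_deriv)
qed

lemma deriv_lin: "deriv (\<lambda>s::real. a + s * b) x = b"
  by (rule DERIV_imp_deriv) (auto intro!: derivative_eq_intros)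

lemma abs_lt_all_eq: "(\<And>e::real. e > 0 \<Longrightarrow> \<bar>a\<bar> < e) \<Longrightarrow> a = 0"
  by (metis abs_not_less_zero less_irrefl zero_less_abs_iff)

lemma schwarz:
  fixes f :: "'a::real_normed_vector \<Rightarrow> real"
  assumes S: "open S" "x \<in> S"
    and du: "\<forall>z\<in>S. (\<lambda>s. f (z + s *\<^sub>R u)) differentiable (at 0)"
    and dv: "\<forall>z\<in>S. (\<lambda>s. f (z + s *\<^sub>R v)) differentiable (at 0)"
    and duv: "\<forall>z\<in>S. (\<lambda>s. pd f u (z + s *\<^sub>R v)) differentiable (at 0)"
    and dvu: "\<forall>z\<in>S. (\<lambda>s. pd f v (z + s *\<^sub>R u)) differentiable (at 0)"
    and c1: "continuous_on S (pd (pd f u) v)"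
    and c2: "continuous_on S (pd (pd f v) u)"
  shows "pd (pd f u) v x = pd (pd f v) u x"
proof -
  define P where "P = pd (pd f u) v"
  define Q where "Q = pd (pd f v) u"
  define pt where "pt = (\<lambda>s s'::real. x + s *\<^sub>R u + s' *\<^sub>R v)"
  have Du: "((\<lambda>s. f (pt s s')) has_real_derivative pd f u (pt s s')) (at s)"
    if "pt s s' \<in> S" for s s'
  proof -
    have e: "\<And>r. pt r s' = (x + s' *\<^sub>R v) + r *\<^sub>R u" unfolding pt_def by (simp add: algebra_simps)
    have "(\<lambda>r. f ((x + s' *\<^sub>R v + s *\<^sub>R u) + r *\<^sub>R u)) differentiable (at 0)"
      using du that e[of s] by simp
    from pd_line[OF this] show ?thesis unfolding e .
  qed
  have Dv: "((\<lambda>s'. f (pt s s')) has_real_derivative pd f v (pt s s')) (at s')"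
    if "pt s s' \<in> S" for s s'
  proof -
    have e: "\<And>r. pt s r = (x + s *\<^sub>R u) + r *\<^sub>R v" unfolding pt_def by (simp add: algebra_simps)
    have "(\<lambda>r. f ((x + s *\<^sub>R u + s' *\<^sub>R v) + r *\<^sub>R v)) differentiable (at 0)"
      using dv that e[of s'] by simp
    from pd_line[OF this] show ?thesis unfolding e .
  qed
  have DP: "((\<lambda>s'. pd f u (pt s s')) has_real_derivative P (pt s s')) (at s')"
    if "pt s s' \<in> S" for s s'
  proof -
    have e: "\<And>r. pt s r = (x + s *\<^sub>R u) + r *\<^sub>R v" unfolding pt_def by (simp add: algebra_simps)
    have "(\<lambda>r. pd f u ((x + s *\<^sub>R u + s' *\<^sub>R v) + r *\<^sub>R v)) differentiable (at 0)"
      using duv that e[of s'] by simp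
    from pd_line[OF this] show ?thesis unfolding e P_def .
  qed
  have DQ: "((\<lambda>s. pd f v (pt s s')) has_real_derivative Q (pt s s')) (at s)"
    if "pt s s' \<in> S" for s s'
  proof -
    have e: "\<And>r. pt r s' = (x + s' *\<^sub>R v) + r *\<^sub>R u" unfolding pt_def by (simp add: algebra_simps)
    have "(\<lambda>r. pd f v ((x + s' *\<^sub>R v + s *\<^sub>R u) + r *\<^sub>R u)) differentiable (at 0)"
      using dvu that e[of s] by simp
    from pd_line[OF this] show ?thesis unfolding e Q_def .
  qed
  have "\<bar>P x - Q x\<bar> < \<delta>" if "\<delta> > 0" for \<delta>
  proof -
    obtain r0 where r0: "r0 > 0" "ball x r0 \<subseteq> S" using S openE by blast
    obtain r1 where r1: "r1 > 0" "\<forall>z\<in>S. dist z x < r1 \<longrightarrow> dist (P z) (P x) < \<delta>/2"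
      using c1 S(2) \<open>\<delta> > 0\<close> unfolding continuous_on_iff P_def by (meson half_gt_zero)
    obtain r2 where r2: "r2 > 0" "\<forall>z\<in>S. dist z x < r2 \<longrightarrow> dist (Q z) (Q x) < \<delta>/2"
      using c2 S(2) \<open>\<delta> > 0\<close> unfolding continuous_on_iff Q_def by (meson half_gt_zero)
    define R where "R = min r0 (min r1 r2)"
    have R: "R > 0" "R \<le> r0" "R \<le> r1" "R \<le> r2" using r0 r1 r2 unfolding R_def by auto
    define h where "h = R / (2 * (norm u + norm v + 1))"
    have hpos: "h > 0" unfolding h_def using R by (simp add: add_nonneg_pos)
    have ptin: "pt s s' \<in> S \<and> dist (pt s s') x < r1 \<and> dist (pt s s') x < r2"
      if "0 \<le> s" "s \<le> h" "0 \<le> s'" "s' \<le> h" for s s'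
    proof -
      have "dist (pt s s') x = norm (s *\<^sub>R u + s' *\<^sub>R v)" unfolding pt_def dist_norm by simp
      also have "\<dots> \<le> norm (s *\<^sub>R u) + norm (s' *\<^sub>R v)" by (rule norm_triangle_ineq)
      also have "\<dots> = s * norm u + s' * norm v" using that by simp
      also have "\<dots> \<le> h * norm u + h * norm v"
        using that by (intro add_mono mult_right_mono) auto
      also have "\<dots> < R"
      proof -
        have "h * norm u + h * norm v = h * (norm u + norm v)" by (simp add: algebra_simps)
        also have "\<dots> < h * (2 * (norm u + norm v + 1))"
        proof (rule mult_strict_left_mono)
          show "norm u + norm v < 2 * (norm u + norm v + 1)"
            by (smt (verit) norm_ge_zero)
        qed (rule hpos)
        also have "\<dots> = R"
        proof -
          have "2 * (norm u + norm v + 1) \<noteq> 0" by (smt (verit) norm_ge_zero)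
          then show ?thesis unfolding h_def by simp
        qed
        finally show ?thesis .
      qed
      finally have d: "dist (pt s s') x < R" .
      then have "pt s s' \<in> ball x r0" using R by (simp add: dist_commute)
      then show ?thesis using d R r0 by auto
    qed
    define \<Delta> where "\<Delta> = f (pt h h) - f (pt h 0) - f (pt 0 h) + f (pt 0 0)"
    have d1: "((\<lambda>s. f (pt s h) - f (pt s 0)) has_real_derivative pd f u (pt s h) - pd f u (pt s 0)) (at s)"
      if "0 \<le> s" "s \<le> h" for s
      using that hpos by (intro DERIV_diff Du) (auto intro: ptin[THEN conjunct1])
    obtain \<xi> where \<xi>: "0 < \<xi>" "\<xi> < h"
      "(f (pt h h) - f (pt h 0)) - (f (pt 0 h) - f (pt 0 0)) = (h - 0) * (pd f u (pt \<xi> h) - pd f u (pt \<xi> 0))"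
      using MVT2[OF hpos d1] by blast
    have d2: "((\<lambda>s'. pd f u (pt \<xi> s')) has_real_derivative P (pt \<xi> s')) (at s')"
      if "0 \<le> s'" "s' \<le> h" for s'
      using that \<xi> by (intro DP) (auto intro: ptin[THEN conjunct1])
    obtain \<eta> where \<eta>: "0 < \<eta>" "\<eta> < h"
      "pd f u (pt \<xi> h) - pd f u (pt \<xi> 0) = (h - 0) * P (pt \<xi> \<eta>)"
      using MVT2[OF hpos d2] by blast
    have d3: "((\<lambda>s'. f (pt h s') - f (pt 0 s')) has_real_derivative pd f v (pt h s') - pd f v (pt 0 s')) (at s')"
      if "0 \<le> s'" "s' \<le> h" for s'
      using that hpos by (intro DERIV_diff Dv) (auto intro: ptin[THEN conjunct1])
    obtain \<eta>2 where \<eta>2: "0 < \<eta>2" "\<eta>2 < h"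
      "(f (pt h h) - f (pt 0 h)) - (f (pt h 0) - f (pt 0 0)) = (h - 0) * (pd f v (pt h \<eta>2) - pd f v (pt 0 \<eta>2))"
      using MVT2[OF hpos d3] by blast
    have d4: "((\<lambda>s. pd f v (pt s \<eta>2)) has_real_derivative Q (pt s \<eta>2)) (at s)"
      if "0 \<le> s" "s \<le> h" for s
      using that \<eta>2 by (intro DQ) (auto intro: ptin[THEN conjunct1])
    obtain \<xi>2 where \<xi>2: "0 < \<xi>2" "\<xi>2 < h"
      "pd f v (pt h \<eta>2) - pd f v (pt 0 \<eta>2) = (h - 0) * Q (pt \<xi>2 \<eta>2)"
      using MVT2[OF hpos d4] by blast
    have "h * h * P (pt \<xi> \<eta>) = h * h * Q (pt \<xi>2 \<eta>2)"
      using \<xi>(3) \<eta>(3) \<eta>2(3) \<xi>2(3) by (simp add: algebra_simps)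
    then have PQ: "P (pt \<xi> \<eta>) = Q (pt \<xi>2 \<eta>2)" using hpos by simp
    have p1: "dist (P (pt \<xi> \<eta>)) (P x) < \<delta>/2" using r1 ptin[of \<xi> \<eta>] \<xi> \<eta> by auto
    have p2: "dist (Q (pt \<xi>2 \<eta>2)) (Q x) < \<delta>/2" using r2 ptin[of \<xi>2 \<eta>2] \<xi>2 \<eta>2 by auto
    show ?thesis using p1 p2 PQ unfolding dist_real_def by linarith
  qed
  then have "P x - Q x = 0" by (rule abs_lt_all_eq)
  then show ?thesis unfolding P_def Q_def by simp
qed


subsection \<open>Smoothness and iterated partials\<close>

lemma iter_pd_append: "iter_pd (iter_pd f L) vs = iter_pd f (vs @ L)"
  by (induction vs) auto

lemma smooth_iter: "smooth_on S f \<Longrightarrow> set L \<subseteq> Basis \<Longrightarrow> smooth_on S (iter_pd f L)"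
  unfolding smooth_on_def iter_pd_append by auto

lemma smooth_cont: "smooth_on S f \<Longrightarrow> set L \<subseteq> Basis \<Longrightarrow> continuous_on S (iter_pd f L)"
  unfolding smooth_on_def by auto

lemma smooth_diff: "smooth_on S f \<Longrightarrow> set L \<subseteq> Basis \<Longrightarrow> v \<in> Basis \<Longrightarrow> x \<in> S \<Longrightarrow>
    (\<lambda>s. iter_pd f L (x + s *\<^sub>R v)) differentiable (at 0)"
  unfolding smooth_on_def by auto

lemma smooth_has: "smooth_on S f \<Longrightarrow> set L \<subseteq> Basis \<Longrightarrow> v \<in> Basis \<Longrightarrow> x \<in> S \<Longrightarrow>
    ((\<lambda>s. iter_pd f L (x + s *\<^sub>R v)) has_real_derivative iter_pd f (v # L) x) (at 0)"
  using pd_has[OF smooth_diff] by simp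

lemma smooth_swap0:
  assumes "open S" "smooth_on S f" "u \<in> Basis" "v \<in> Basis" "x \<in> S"
  shows "iter_pd f [v,u] x = iter_pd f [u,v] x"
proof -
  have "pd (pd f u) v x = pd (pd f v) u x"
  proof (rule schwarz[OF assms(1,5)])
    show "\<forall>z\<in>S. (\<lambda>s. f (z + s *\<^sub>R u)) differentiable at 0"
      using smooth_diff[OF assms(2), of "[]"] assms by auto
    show "\<forall>z\<in>S. (\<lambda>s. f (z + s *\<^sub>R v)) differentiable at 0"
      using smooth_diff[OF assms(2), of "[]"] assms by auto
    show "\<forall>z\<in>S. (\<lambda>s. pd f u (z + s *\<^sub>R v)) differentiable at 0"
      using smooth_diff[OF assms(2), of "[u]"] assms by auto
    show "\<forall>z\<in>S. (\<lambda>s. pd f v (z + s *\<^sub>R u)) differentiable at 0"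
      using smooth_diff[OF assms(2), of "[v]"] assms by auto
    show "continuous_on S (pd (pd f u) v)"
      using smooth_cont[OF assms(2), of "[v,u]"] assms by auto
    show "continuous_on S (pd (pd f v) u)"
      using smooth_cont[OF assms(2), of "[u,v]"] assms by auto
  qed
  then show ?thesis by simp
qed

lemma smooth_swap:
  assumes "open S" "smooth_on S f" "set (L1 @ u # v # L2) \<subseteq> Basis" "x \<in> S"
  shows "iter_pd f (L1 @ v # u # L2) x = iter_pd f (L1 @ u # v # L2) x"
  using assms(3,4)
proof (induction L1 arbitrary: x)
  case Nil
  have sm: "smooth_on S (iter_pd f L2)" using smooth_iter[OF assms(2)] Nil by auto
  have "iter_pd (iter_pd f L2) [v,u] x = iter_pd (iter_pd f L2) [u,v] x"
    using smooth_swap0[OF assms(1) sm] Nil by auto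
  then show ?case unfolding iter_pd_append by simp
next
  case (Cons w L1)
  have "pd (iter_pd f (L1 @ v # u # L2)) w x = pd (iter_pd f (L1 @ u # v # L2)) w x"
    by (rule pd_cong[OF assms(1) Cons.prems(2)]) (use Cons in auto)
  then show ?case by simp
qed

subsection \<open>One-dimensional smoothness\<close>

definition Dn :: "nat \<Rightarrow> real set \<Rightarrow> (real \<Rightarrow> real) \<Rightarrow> bool" where
  "Dn n I f \<longleftrightarrow> (\<forall>k\<le>n. \<forall>t\<in>I. (deriv ^^ k) f differentiable (at t))"

lemma Dn_0: "Dn 0 I f \<longleftrightarrow> (\<forall>t\<in>I. f differentiable (at t))"
  unfolding Dn_def by auto

lemma Dn_Suc: "Dn (Suc n) I f \<longleftrightarrow> (\<forall>t\<in>I. f differentiable (at t)) \<and> Dn n I (deriv f)"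
proof -
  have e: "(deriv ^^ Suc k) f = (deriv ^^ k) (deriv f)" for k
    by (simp add: funpow_Suc_right del: funpow.simps)
  show ?thesis
  proof
    assume a: "Dn (Suc n) I f"
    then have "\<forall>t\<in>I. f differentiable (at t)" unfolding Dn_def by (metis funpow_0 le0)
    moreover have "Dn n I (deriv f)" unfolding Dn_def
    proof (intro allI impI ballI)
      fix k t assume "k \<le> n" "t \<in> I"
      then show "(deriv ^^ k) (deriv f) differentiable at t"
        using a unfolding Dn_def e[symmetric] by auto
    qed
    ultimately show "(\<forall>t\<in>I. f differentiable (at t)) \<and> Dn n I (deriv f)" ..
  next
    assume a: "(\<forall>t\<in>I. f differentiable (at t)) \<and> Dn n I (deriv f)"
    show "Dn (Suc n) I f" unfolding Dn_def
    proof (intro allI impI ballI)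
      fix k t assume k: "k \<le> Suc n" and t: "t \<in> I"
      show "(deriv ^^ k) f differentiable at t"
      proof (cases k)
        case 0 then show ?thesis using a t by simp
      next
        case (Suc k')
        then have "(deriv ^^ k) f = (deriv ^^ k') (deriv f)" by (simp only: e)
        then show ?thesis using a k t Suc unfolding Dn_def by auto
      qed
    qed
  qed
qed

lemma Dn_mono: "m \<le> n \<Longrightarrow> Dn n I f \<Longrightarrow> Dn m I f"
  unfolding Dn_def by auto

lemma Dn_cong:
  assumes "open I" "\<And>t. t \<in> I \<Longrightarrow> f t = g t" "Dn n I f"
  shows "Dn n I g"
  unfolding Dn_def
proof (intro allI impI ballI)
  fix k t assume k: "k \<le> n" and t: "t \<in> I"
  obtain d where d: "d > 0" "ball t d \<subseteq> I" using assms(1) t openE by blast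
  have eq: "(deriv ^^ k) f x = (deriv ^^ k) g x" if "x \<in> I" for x
  proof (rule higher_deriv_cong_ev)
    show "\<forall>\<^sub>F x in nhds x. f x = g x"
      using assms(1,2) that by (auto intro: eventually_nhds_in_open eventually_mono)
  qed simp
  show "(deriv ^^ k) g differentiable at t"
  proof (rule differentiable_transform_within[of "(deriv ^^ k) f" _ _ d])
    show "(deriv ^^ k) f differentiable at t" using assms(3) k t unfolding Dn_def by auto
    fix x' assume "dist x' t < d"
    then have "x' \<in> I" using d by (auto simp: dist_commute)
    then show "(deriv ^^ k) f x' = (deriv ^^ k) g x'" by (rule eq)
  qed (use d in auto)
qed

lemma deriv_eq_on:
  assumes "open I" "\<And>t. t \<in> I \<Longrightarrow> (f has_real_derivative f' t) (at t)"
  shows "\<And>t. t \<in> I \<Longrightarrow> deriv f t = f' t"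
  using assms(2) by (rule DERIV_imp_deriv)

lemma Dn_from_deriv:
  assumes "open I" "\<And>t. t \<in> I \<Longrightarrow> (f has_real_derivative f' t) (at t)" "Dn n I f'"
  shows "Dn (Suc n) I f"
  unfolding Dn_Suc
proof
  show "\<forall>t\<in>I. f differentiable at t" using assms(2) real_differentiable_def by blast
  show "Dn n I (deriv f)"
    by (rule Dn_cong[OF assms(1) _ assms(3)]) (metis DERIV_imp_deriv assms(2))
qed

lemma Dn_Suc_has:
  assumes "Dn (Suc n) I f" "t \<in> I"
  shows "(f has_real_derivative deriv f t) (at t)"
  using assms unfolding Dn_Suc by (simp add: DERIV_deriv_iff_real_differentiable)

lemma Dn_const: "Dn n I (\<lambda>t. c)"
proof -
  have "\<exists>c'. (deriv ^^ k) (\<lambda>t. c) = (\<lambda>t. c')" for k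
  proof (induction k)
    case 0 then show ?case by auto
  next
    case (Suc k)
    then obtain c' where "(deriv ^^ k) (\<lambda>t. c) = (\<lambda>t. c')" by blast
    then show ?case by (auto intro!: ext DERIV_imp_deriv derivative_eq_intros)
  qed
  then show ?thesis unfolding Dn_def by (metis differentiable_const)
qed

lemma Dn_add:
  assumes "open I" shows "Dn n I f \<Longrightarrow> Dn n I g \<Longrightarrow> Dn n I (\<lambda>t. f t + g t)"
proof (induction n arbitrary: f g)
  case 0 then show ?case unfolding Dn_0 by auto
next
  case (Suc n)
  show ?case
  proof (rule Dn_from_deriv[OF assms])
    show "((\<lambda>t. f t + g t) has_real_derivative deriv f t + deriv g t) (at t)" if "t \<in> I" for t
      using Dn_Suc_has[OF Suc.prems(1) that] Dn_Suc_has[OF Suc.prems(2) that] by (rule DERIV_add)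
    show "Dn n I (\<lambda>t. deriv f t + deriv g t)"
      using Suc by (simp add: Dn_Suc)
  qed
qed

lemma Dn_mult:
  assumes "open I" shows "Dn n I f \<Longrightarrow> Dn n I g \<Longrightarrow> Dn n I (\<lambda>t. f t * g t)"
proof (induction n arbitrary: f g)
  case 0 then show ?case unfolding Dn_0 by auto
next
  case (Suc n)
  show ?case
  proof (rule Dn_from_deriv[OF assms])
    show "((\<lambda>t. f t * g t) has_real_derivative deriv f t * g t + f t * deriv g t) (at t)" if "t \<in> I" for t
      using DERIV_mult[OF Dn_Suc_has[OF Suc.prems(1) that] Dn_Suc_has[OF Suc.prems(2) that]]
      by (simp add: algebra_simps)
    have "Dn n I (\<lambda>t. deriv f t * g t)"
      using Suc Dn_mono[of n "Suc n"] by (simp add: Dn_Suc)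
    moreover have "Dn n I (\<lambda>t. f t * deriv g t)"
      using Suc Dn_mono[of n "Suc n"] by (simp add: Dn_Suc)
    ultimately show "Dn n I (\<lambda>t. deriv f t * g t + f t * deriv g t)"
      by (rule Dn_add[OF assms])
  qed
qed

lemma Dn_inverse:
  assumes "open I" "\<And>t. t \<in> I \<Longrightarrow> f t \<noteq> 0"
  shows "Dn n I f \<Longrightarrow> Dn n I (\<lambda>t. inverse (f t))"
proof (induction n)
  case 0
  then show ?case unfolding Dn_0
    using DERIV_inverse_fun assms(2) real_differentiable_def by blast
next
  case (Suc n)
  show ?case
  proof (rule Dn_from_deriv[OF assms(1)])
    show "((\<lambda>t. inverse (f t)) has_real_derivative
            (-1) * (deriv f t * (inverse (f t) * inverse (f t)))) (at t)" if "t \<in> I" for t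
      using DERIV_inverse_fun[OF Dn_Suc_has[OF Suc.prems that] assms(2)[OF that]]
      by (simp add: power2_eq_square inverse_mult_distrib)
    have i: "Dn n I (\<lambda>t. inverse (f t))" using Suc Dn_mono[of n "Suc n"] by auto
    have d: "Dn n I (deriv f)" using Suc.prems by (simp add: Dn_Suc)
    show "Dn n I (\<lambda>t. (-1) * (deriv f t * (inverse (f t) * inverse (f t))))"
      by (intro Dn_mult[OF assms(1)] Dn_const d i)
  qed
qed

definition sm1 :: "real set \<Rightarrow> (real \<Rightarrow> real) \<Rightarrow> bool" where
  "sm1 I f \<longleftrightarrow> (\<forall>n. Dn n I f)"

lemma Dn_exp:
  assumes "open I" "sm1 I g" shows "Dn n I (\<lambda>t. exp (g t))"
proof (induction n)
  case 0
  have "Dn 0 I g" using assms(2) sm1_def by blast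
  then show ?case unfolding Dn_0 real_differentiable_def
    using DERIV_chain2[OF DERIV_exp] by blast
next
  case (Suc n)
  show ?case
  proof (rule Dn_from_deriv[OF assms(1)])
    have g1: "Dn (Suc 0) I g" using assms(2) sm1_def by blast
    show "((\<lambda>t. exp (g t)) has_real_derivative exp (g t) * deriv g t) (at t)" if "t \<in> I" for t
      using DERIV_chain2[OF DERIV_exp Dn_Suc_has[OF g1 that]] .
    have "Dn n I (deriv g)" using assms(2) unfolding sm1_def by (metis Dn_Suc)
    then show "Dn n I (\<lambda>t. exp (g t) * deriv g t)"
      by (intro Dn_mult[OF assms(1)] Suc)
  qed
qed

lemma sm1_cong:
  assumes "open I" "\<And>t. t \<in> I \<Longrightarrow> f t = g t" "sm1 I f" shows "sm1 I g"
  unfolding sm1_def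
proof
  fix n have "Dn n I f" using assms(3) sm1_def by blast
  then show "Dn n I g" by (rule Dn_cong[OF assms(1), rotated]) (rule assms(2))
qed

lemma sm1_add:
  assumes "open I" "sm1 I f" "sm1 I g" shows "sm1 I (\<lambda>t. f t + g t)"
  unfolding sm1_def
proof
  fix n show "Dn n I (\<lambda>t. f t + g t)" using Dn_add[OF assms(1)] assms(2,3) unfolding sm1_def by blast
qed

lemma sm1_mult:
  assumes "open I" "sm1 I f" "sm1 I g" shows "sm1 I (\<lambda>t. f t * g t)"
  unfolding sm1_def
proof
  fix n show "Dn n I (\<lambda>t. f t * g t)" using Dn_mult[OF assms(1)] assms(2,3) unfolding sm1_def by blast
qed

lemma sm1_const: "sm1 I (\<lambda>t. c)"
  unfolding sm1_def using Dn_const by blast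

lemma sm1_diff: "open I \<Longrightarrow> sm1 I f \<Longrightarrow> sm1 I g \<Longrightarrow> sm1 I (\<lambda>t. f t - g t)"
proof -
  assume a: "open I" "sm1 I f" "sm1 I g"
  have "sm1 I (\<lambda>t. f t + (-1) * g t)" by (rule sm1_add[OF a(1) a(2) sm1_mult[OF a(1) sm1_const a(3)]])
  then show ?thesis by simp
qed

lemma sm1_inverse:
  assumes "open I" "\<And>t. t \<in> I \<Longrightarrow> f t \<noteq> 0" "sm1 I f" shows "sm1 I (\<lambda>t. inverse (f t))"
  unfolding sm1_def
proof
  fix n have d: "Dn n I f" using assms(3) sm1_def by blast
  show "Dn n I (\<lambda>t. inverse (f t))" by (rule Dn_inverse[OF assms(1)]) (use assms(2) d in auto)
qed

lemma sm1_exp: "open I \<Longrightarrow> sm1 I g \<Longrightarrow> sm1 I (\<lambda>t. exp (g t))"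
  unfolding sm1_def[of I "\<lambda>t. exp (g t)"] by (intro allI Dn_exp)

lemma sm1_antideriv:
  assumes "open I" "\<And>t. t \<in> I \<Longrightarrow> (G has_real_derivative f t) (at t)" "sm1 I f"
  shows "sm1 I G"
  unfolding sm1_def
proof
  fix n have d: "Dn n I f" using assms(3) sm1_def by blast
  have "Dn (Suc n) I G" by (rule Dn_from_deriv[OF assms(1)]) (use assms(2) d in auto)
  then show "Dn n I G" by (rule Dn_mono[rotated]) simp
qed

lemma sm1_sum:
  assumes "open I" "finite A" "\<And>a. a \<in> A \<Longrightarrow> sm1 I (f a)"
  shows "sm1 I (\<lambda>t. \<Sum>a\<in>A. f a t)"
  using assms(2,3)
proof (induction A rule: finite_induct)
  case empty then show ?case using sm1_const by simp
next
  case (insert a A)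
  then show ?case by (simp add: sm1_add[OF assms(1)])
qed

lemma pd_real_one: "pd g (1::real) = deriv g"
  by (rule ext) (simp add: pd_def deriv_shift0[of g])

lemma iter_pd_rep: "iter_pd f (replicate n (1::real)) = (deriv ^^ n) f"
  by (induction n) (auto simp: pd_real_one)

lemma sm1_smooth: "sm1 I f \<Longrightarrow> smooth_on I f"
  unfolding smooth_on_def
proof (intro allI impI)
  fix vs :: "real list" assume a: "sm1 I f" "set vs \<subseteq> Basis"
  then have vs: "vs = replicate (length vs) 1" by (auto intro: replicate_eqI)
  have ip: "iter_pd f vs = (deriv ^^ length vs) f" by (subst vs, rule iter_pd_rep)
  have d: "\<forall>t\<in>I. (deriv ^^ length vs) f differentiable (at t)"
    using a unfolding sm1_def Dn_def by auto
  show "continuous_on I (iter_pd f vs) \<and>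
        (\<forall>v\<in>Basis. \<forall>x\<in>I. (\<lambda>s. iter_pd f vs (x + s *\<^sub>R v)) differentiable at 0)"
  proof (intro conjI ballI)
    show "continuous_on I (iter_pd f vs)" unfolding ip
      by (rule continuous_at_imp_continuous_on) (use d differentiable_imp_continuous_within in blast)
    fix v :: real and x assume "v \<in> Basis" "x \<in> I"
    then have "v = 1" by simp
    then show "(\<lambda>s. iter_pd f vs (x + s *\<^sub>R v)) differentiable at 0"
      using d \<open>x \<in> I\<close> unfolding ip by (simp add: diff_shift0[symmetric])
  qed
qed


lemma int_zero_ge: "(x::real) \<ge> 0 \<Longrightarrow> integral {x..0} f = (0::real)"
  by (cases "x = 0") auto

lemma int_zero_le: "(x::real) \<le> 0 \<Longrightarrow> integral {0..x} f = (0::real)"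
  by (cases "x = 0") auto

lemma antideriv_exists:
  fixes f :: "real \<Rightarrow> real"
  assumes "continuous_on {-e<..<e} f"
  shows "\<exists>G. \<forall>t\<in>{-e<..<e}. (G has_real_derivative f t) (at t)"
proof -
  define G where "G x = integral {0..x} f - integral {x..0} f" for x
  have "(G has_real_derivative f t) (at t)" if t: "t \<in> {-e<..<e}" for t
  proof -
    define a where "a = (-e + min t 0) / 2"
    define b where "b = (e + max t 0) / 2"
    have ab: "-e < a" "a < t" "a < 0" "t < b" "0 < b" "b < e" using t unfolding a_def b_def by auto
    have sub: "{a..b} \<subseteq> {-e<..<e}" using ab by auto
    have cont: "continuous_on {a..b} f" using assms sub continuous_on_subset by blast
    have intg: "f integrable_on {a..x}" if "x \<le> b" for x
      by (rule integrable_continuous_real, rule continuous_on_subset[OF cont]) (use that in auto)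
    define H where "H = (\<lambda>x. integral {a..x} f - integral {a..0} f)"
    have GH: "G x = H x" if "x \<in> {a<..<b}" for x
    proof (cases "x \<ge> 0")
      case True
      have "integral {a..0} f + integral {0..x} f = integral {a..x} f"
        using Henstock_Kurzweil_Integration.integral_combine[where a=a and c=0 and b=x and f=f] True ab intg that by auto
      then show ?thesis unfolding G_def H_def using int_zero_ge[OF True] by simp
    next
      case False
      have "integral {a..x} f + integral {x..0} f = integral {a..0} f"
        using Henstock_Kurzweil_Integration.integral_combine[where a=a and c=x and b=0 and f=f] False ab intg that by auto
      then show ?thesis unfolding G_def H_def using int_zero_le[of x] False by simp
    qed
    have "((\<lambda>x. integral {a..x} f) has_real_derivative f t) (at t within {a..b})"
      using integral_has_real_derivative[OF cont] ab by auto
    moreover have "at t within {a..b} = at t"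
      by (rule at_within_open_subset[of _ "{a<..<b}"]) (use ab in auto)
    ultimately have "((\<lambda>x. integral {a..x} f) has_real_derivative f t) (at t)" by simp
    then have "((\<lambda>x. integral {a..x} f - integral {a..0} f) has_real_derivative f t - 0) (at t)"
      by (intro DERIV_diff DERIV_const)
    then have "(H has_real_derivative f t) (at t)" unfolding H_def by simp
    then show ?thesis
      by (rule has_field_derivative_transform_within_open[of _ _ _ "{a<..<b}"]) (use ab GH in auto)
  qed
  then show ?thesis by blast
qed


lemma sm1_cont: "sm1 I f \<Longrightarrow> continuous_on I f"
  unfolding sm1_def using Dn_0[of I f] apply simp
  by (rule continuous_at_imp_continuous_on) (use differentiable_imp_continuous_within in blast)

lemma sm1_has: "sm1 I f \<Longrightarrow> t \<in> I \<Longrightarrow> (f has_real_derivative deriv f t) (at t)"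
  unfolding sm1_def by (rule Dn_Suc_has[of 0]) auto

lemma ode_solve:
  fixes c g :: "real \<Rightarrow> real" and e :: real
  defines "I \<equiv> {-e<..<e}"
  assumes c: "sm1 I c" and g: "sm1 I g"
  shows "\<exists>B u. sm1 I B \<and> (\<forall>t\<in>I. (B has_real_derivative u t) (at t)) \<and>
           (\<forall>t\<in>I. (u has_real_derivative c t * u t - g t) (at t))"
proof -
  have oI: "open I" unfolding I_def by simp
  obtain \<gamma> where \<gamma>: "\<forall>t\<in>I. (\<gamma> has_real_derivative c t) (at t)"
    using antideriv_exists[OF sm1_cont[OF c[unfolded I_def]]] unfolding I_def by blast
  have s\<gamma>: "sm1 I \<gamma>" using sm1_antideriv[OF oI] \<gamma> c by blast
  define E where "E t = exp (\<gamma> t)" for t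
  have sE: "sm1 I E" unfolding E_def using sm1_exp[OF oI s\<gamma>] .
  have dE: "(E has_real_derivative c t * E t) (at t)" if "t \<in> I" for t
    unfolding E_def using DERIV_chain2[OF DERIV_exp \<gamma>[rule_format, OF that]] by (simp add: mult.commute)
  define q where "q t = (-1) * (g t * inverse (E t))" for t
  have Enz: "\<And>t. t \<in> I \<Longrightarrow> E t \<noteq> 0" by (simp add: E_def)
  have sq: "sm1 I q" unfolding q_def
    by (rule sm1_mult[OF oI sm1_const sm1_mult[OF oI g sm1_inverse[OF oI Enz sE]]])
  obtain P where P: "\<forall>t\<in>I. (P has_real_derivative q t) (at t)"
    using antideriv_exists[OF sm1_cont[OF sq[unfolded I_def]]] unfolding I_def by blast
  have sP: "sm1 I P" using sm1_antideriv[OF oI] P sq by blast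
  define u where "u t = E t * P t" for t
  have su: "sm1 I u" unfolding u_def by (rule sm1_mult[OF oI sE sP])
  have du: "(u has_real_derivative c t * u t - g t) (at t)" if "t \<in> I" for t
  proof -
    have "(u has_real_derivative c t * E t * P t + q t * E t) (at t)"
      unfolding u_def using DERIV_mult[OF dE[OF that] P[rule_format, OF that]] by simp
    moreover have "E t \<noteq> 0" unfolding E_def by simp
    moreover have "c t * E t * P t + q t * E t = c t * u t - g t"
      unfolding q_def u_def using \<open>E t \<noteq> 0\<close> by (simp add: field_simps)
    ultimately show ?thesis by simp
  qed
  obtain B where B: "\<forall>t\<in>I. (B has_real_derivative u t) (at t)"
    using antideriv_exists[OF sm1_cont[OF su[unfolded I_def]]] unfolding I_def by blast
  have sB: "sm1 I B" using sm1_antideriv[OF oI] B su by blast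
  show ?thesis using sB B du by blast
qed


lemma line_shift:
  fixes h :: "'a::real_normed_vector \<Rightarrow> real"
  assumes "((\<lambda>s. h ((x + r *\<^sub>R v) + s *\<^sub>R v)) has_real_derivative D) (at 0)"
  shows "((\<lambda>s. h (x + s *\<^sub>R v)) has_real_derivative D) (at r)"
proof -
  have "(\<lambda>s. h (x + (s + r) *\<^sub>R v)) = (\<lambda>s. h ((x + r *\<^sub>R v) + s *\<^sub>R v))"
    by (simp add: algebra_simps)
  then have "((\<lambda>s. h (x + (s + r) *\<^sub>R v)) has_real_derivative D) (at 0)"
    using assms by simp
  then show ?thesis using DERIV_shift[of "\<lambda>s. h (x + s *\<^sub>R v)" _ 0 r] by simp
qed

lemma const_ball:
  fixes h :: "real^'n::finite \<Rightarrow> real"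
  assumes d: "\<forall>y\<in>ball 0 r. \<forall>k. ((\<lambda>s. h (y + s *\<^sub>R axis k 1)) has_real_derivative 0) (at 0)"
  shows "\<forall>y\<in>ball 0 r. h y = h 0"
proof
  fix y :: "real^'n" assume y: "y \<in> ball 0 r"
  define rst where "rst K = (\<chi> i. if i \<in> K then y $ i else 0)" for K
  have nb: "norm (rst K + s *\<^sub>R axis k 1) < r" if "k \<notin> K" "\<bar>s\<bar> \<le> \<bar>y $ k\<bar>" for K k s
  proof -
    have "norm (rst K + s *\<^sub>R axis k 1) \<le> norm y"
    proof (rule norm_le_componentwise_cart)
      fix i show "norm ((rst K + s *\<^sub>R axis k 1) $ i) \<le> norm (y $ i)"
      proof (cases "i = k")
        case True then show ?thesis using that by (simp add: rst_def axis_def)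
      next
        case False then show ?thesis by (simp add: rst_def axis_def)
      qed
    qed
    then show ?thesis using y by simp
  qed
  have ind: "h (rst K) = h 0" if "finite K" for K
    using that
  proof (induction K rule: finite_induct)
    case empty
    have "rst {} = 0" unfolding rst_def by (simp add: vec_eq_iff)
    then show ?case by simp
  next
    case (insert k K)
    have e: "rst (insert k K) = rst K + (y $ k) *\<^sub>R axis k 1"
      unfolding vec_eq_iff
    proof
      fix i show "rst (insert k K) $ i = (rst K + y $ k *\<^sub>R axis k 1) $ i"
      proof (cases "i = k")
        case True then show ?thesis using insert(2) by (simp add: rst_def axis_def)
      next
        case False then show ?thesis by (simp add: rst_def axis_def)
      qed
    qed
    define S where "S = closed_segment 0 (y $ k)"
    have inS: "\<bar>s\<bar> \<le> \<bar>y $ k\<bar>" if "s \<in> S" for s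
      using that unfolding S_def closed_segment_eq_real_ivl by (auto split: if_splits)
    have der: "((\<lambda>s. h (rst K + s *\<^sub>R axis k 1)) has_real_derivative 0) (at s within S)" if "s \<in> S" for s
    proof -
      have "rst K + s *\<^sub>R axis k 1 \<in> ball 0 r" using nb[OF insert(2) inS[OF that]] by simp
      then have "((\<lambda>s'. h ((rst K + s *\<^sub>R axis k 1) + s' *\<^sub>R axis k 1)) has_real_derivative 0) (at 0)"
        using d by blast
      then show ?thesis by (rule has_field_derivative_at_within[OF line_shift])
    qed
    have cv: "convex S" unfolding S_def by (rule convex_closed_segment)
    obtain c where cc: "\<forall>s\<in>S. h (rst K + s *\<^sub>R axis k 1) = c"
      using has_field_derivative_zero_constant[OF cv der] by blast
    have "0 \<in> S" "y $ k \<in> S" unfolding S_def by auto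
    then have "h (rst K + (y $ k) *\<^sub>R axis k 1) = c" "h (rst K + 0 *\<^sub>R axis k 1) = c"
      using cc by blast+
    then have "h (rst K + (y $ k) *\<^sub>R axis k 1) = h (rst K + 0 *\<^sub>R axis k 1)" by simp
    then show ?case using insert.IH e by simp
  qed
  have "rst UNIV = y" unfolding rst_def by (simp add: vec_eq_iff)
  moreover have "h (rst UNIV) = h 0" by (rule ind) simp
  ultimately show "h y = h 0" by simp
qed


subsection \<open>Coordinates\<close>

definition Fp :: "(real \<Rightarrow> real^'n::finite \<Rightarrow> real) \<Rightarrow> real \<times> (real^'n) \<Rightarrow> real" where
  "Fp \<psi> = (\<lambda>(t, y). \<psi> t y)"

lemma Fp_apply[simp]: "Fp \<psi> (t, y) = \<psi> t y" by (simp add: Fp_def)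

definition ee :: "real \<times> (real^'n::finite)" where "ee = (1, 0)"
definition fv :: "'n::finite \<Rightarrow> real \<times> (real^'n)" where "fv j = (0, axis j 1)"

lemma ee_Basis: "ee \<in> Basis" unfolding ee_def Basis_prod_def by auto
lemma fv_Basis: "fv j \<in> Basis" unfolding fv_def Basis_prod_def by (auto simp: axis_in_Basis_iff)

lemma pt_ee: "(t, y) + s *\<^sub>R ee = (t + s, y)" by (simp add: ee_def)
lemma pt_fv: "(t, y) + s *\<^sub>R fv j = (t, y + s *\<^sub>R axis j 1)" by (simp add: fv_def)

lemma E1: "iter_pd G (ee # L) (t, y) = deriv (\<lambda>s. iter_pd G L (s, y)) t"
  by (simp add: pd_def pt_ee deriv_shift0[of "\<lambda>s. iter_pd G L (s, y)"])

lemma E2: "iter_pd G (fv j # L) (t, y) = pd (\<lambda>y'. iter_pd G L (t, y')) (axis j 1) y"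
  by (simp add: pd_def pt_fv)

lemma t_line:
  assumes "((\<lambda>r. G ((s, y) + r *\<^sub>R ee)) has_real_derivative D) (at 0)"
  shows "((\<lambda>s. G (s, y)) has_real_derivative D) (at s)"
proof -
  have "((\<lambda>r. G (r + s, y)) has_real_derivative D) (at 0)" using assms by (simp add: pt_ee add.commute)
  then show ?thesis using DERIV_shift[of "\<lambda>s. G (s, y)" _ 0 s] by simp
qed

lemma y_line:
  assumes "((\<lambda>r. G ((t, y) + r *\<^sub>R fv k)) has_real_derivative D) (at 0)"
  shows "((\<lambda>r. G (t, y + r *\<^sub>R axis k 1)) has_real_derivative D) (at 0)"
  using assms by (simp add: pt_fv)

lemma sum_option: "(\<Sum>k\<in>(UNIV::'n::finite option set). f k) = f None + (\<Sum>m\<in>UNIV. f (Some m))"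
proof -
  have "(\<Sum>k\<in>(UNIV::'n option set). f k) = (\<Sum>k\<in>insert None (range Some). f k)"
    by (simp add: UNIV_option_conv)
  also have "\<dots> = f None + (\<Sum>k\<in>range Some. f k)" by (subst sum.insert) auto
  also have "(\<Sum>k\<in>range Some. f k) = (\<Sum>m\<in>UNIV. f (Some m))"
    by (subst sum.reindex) (auto simp: inj_on_def)
  finally show ?thesis .
qed

lemma det_one_row:
  fixes A :: "real^'m::finite^'m"
  assumes z: "\<And>i j. i \<noteq> j \<Longrightarrow> i \<noteq> ii \<Longrightarrow> A $ i $ j = 0"
  shows "det A = (\<Prod>i\<in>UNIV. A $ i $ i)"
proof -
  let ?P = "{p. p permutes (UNIV::'m set)}"
  let ?t = "\<lambda>p. of_int (sign p) * (\<Prod>i\<in>UNIV. A $ i $ p i)"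
  have fin: "finite ?P" by (rule finite_permutations) simp
  have idP: "id \<in> ?P" by (simp add: permutes_id)
  have zero: "?t p = 0" if p: "p \<in> ?P - {id}" for p
  proof -
    have perm: "p permutes UNIV" and nid: "p \<noteq> id" using p by auto
    have "\<exists>j. p j \<noteq> j" using nid by (auto simp: fun_eq_iff)
    then obtain j where j: "p j \<noteq> j" by blast
    have "\<exists>i. p i \<noteq> i \<and> i \<noteq> ii"
    proof (cases "j = ii")
      case False then show ?thesis using j by blast
    next
      case True
      have "p (p ii) \<noteq> p ii"
      proof
        assume "p (p ii) = p ii"
        then have "p ii = ii" by (rule injD[OF permutes_inj[OF perm]])
        then show False using j True by simp
      qed
      moreover have "p ii \<noteq> ii" using j True by simp
      ultimately show ?thesis by blast
    qed
    then obtain i where "p i \<noteq> i" "i \<noteq> ii" by blast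
    then have "A $ i $ p i = 0" using z[of i "p i"] by auto
    then have "(\<Prod>i\<in>UNIV. A $ i $ p i) = 0" by (intro prod_zero) auto
    then show ?thesis by simp
  qed
  have "det A = sum ?t ?P" unfolding det_def by simp
  also have "\<dots> = ?t id + sum ?t (?P - {id})" by (rule sum.remove[OF fin idP])
  also have "sum ?t (?P - {id}) = 0" using zero by (intro sum.neutral) blast
  finally show ?thesis by (simp add: sign_id)
qed

lemma det_dep_rows:
  fixes A :: "real^'m::finite^'m"
  assumes "i \<noteq> k" "\<And>j. A $ k $ j = c * A $ i $ j"
  shows "det A = 0"
proof -
  have "A = (\<chi> r. if r = k then c *s row i A else row r A)"
    using assms by (auto simp: vec_eq_iff row_def)
  then have "det A = det (\<chi> r. if r = k then c *s row i A else row r A)" by simp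
  also have "\<dots> = c * det (\<chi> r. if r = k then row i A else row r A)"
    by (rule det_row_mul)
  also have "det (\<chi> r. if r = k then row i A else row r A) = 0"
    by (rule det_identical_rows[of i k]) (use assms(1) in \<open>auto simp: row_def vec_eq_iff\<close>)
  finally show ?thesis by simp
qed


subsection \<open>The phase\<close>

lemma phA:
  fixes \<psi> :: "real \<Rightarrow> real^'n::finite \<Rightarrow> real"
  assumes sm: "smooth_on ({-e<..<e} \<times> ball 0 e) (Fp \<psi>)"
    and X: "X $ None \<in> {-e<..<e}" and y: "y' \<in> ball 0 e"
  shows "pd (ti_phase \<psi> X) (axis j 1) y' = X $ Some j + iter_pd (Fp \<psi>) [fv j] (X $ None, y')"
proof -
  let ?L = "(\<chi> j. X $ Some j) :: real^'n"
  have eq: "(\<lambda>s. ti_phase \<psi> X (y' + s *\<^sub>R axis j 1)) =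
      (\<lambda>s. ?L \<bullet> y' + s * (X $ Some j) + Fp \<psi> ((X $ None, y') + s *\<^sub>R fv j))"
    by (rule ext) (simp add: ti_phase_def inner_add_right inner_axis pt_fv)
  have "(\<lambda>s. iter_pd (Fp \<psi>) [] ((X $ None, y') + s *\<^sub>R fv j)) differentiable at 0"
    by (rule smooth_diff[OF sm _ fv_Basis]) (use X y in auto)
  then have d: "(\<lambda>s. Fp \<psi> ((X $ None, y') + s *\<^sub>R fv j)) differentiable at 0" by simp
  have "pd (ti_phase \<psi> X) (axis j 1) y' = deriv (\<lambda>s. ti_phase \<psi> X (y' + s *\<^sub>R axis j 1)) 0"
    by (simp add: pd_def)
  also have "\<dots> = X $ Some j + deriv (\<lambda>s. Fp \<psi> ((X $ None, y') + s *\<^sub>R fv j)) 0"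
    unfolding eq by (rule deriv_lin_plus[OF d])
  also have "deriv (\<lambda>s. Fp \<psi> ((X $ None, y') + s *\<^sub>R fv j)) 0 = iter_pd (Fp \<psi>) [fv j] (X $ None, y')"
    by (simp add: pd_def)
  finally show ?thesis .
qed

lemma phB:
  fixes \<psi> :: "real \<Rightarrow> real^'n::finite \<Rightarrow> real"
  assumes sm: "smooth_on ({-e<..<e} \<times> ball 0 e) (Fp \<psi>)"
    and X: "X $ None \<in> {-e<..<e}" and y: "y \<in> ball 0 e"
  shows "mixed_hess (ti_phase \<psi>) X y $ Some k $ j = (if k = j then 1 else 0)"
proof -
  have N: "(X + s *\<^sub>R axis (Some k) 1) $ None = X $ None" for s by (simp add: axis_def)
  have Sj: "(X + s *\<^sub>R axis (Some k) 1) $ Some j = X $ Some j + s * (if k = j then 1 else 0)" for s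
    by (simp add: axis_def)
  have eq: "(\<lambda>s. pd (ti_phase \<psi> (X + s *\<^sub>R axis (Some k) 1)) (axis j 1) y) =
     (\<lambda>s. (X $ Some j + iter_pd (Fp \<psi>) [fv j] (X $ None, y)) + s * (if k = j then 1 else 0))"
  proof (rule ext)
    fix s
    have "pd (ti_phase \<psi> (X + s *\<^sub>R axis (Some k) 1)) (axis j 1) y =
        (X + s *\<^sub>R axis (Some k) 1) $ Some j + iter_pd (Fp \<psi>) [fv j] ((X + s *\<^sub>R axis (Some k) 1) $ None, y)"
      by (rule phA[OF sm _ y]) (use X in \<open>simp add: axis_def\<close>)
    then show "pd (ti_phase \<psi> (X + s *\<^sub>R axis (Some k) 1)) (axis j 1) y =
     (X $ Some j + iter_pd (Fp \<psi>) [fv j] (X $ None, y)) + s * (if k = j then 1 else 0)"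
      unfolding N Sj by simp
  qed
  have "mixed_hess (ti_phase \<psi>) X y $ Some k $ j =
      deriv (\<lambda>s. pd (ti_phase \<psi> (X + s *\<^sub>R axis (Some k) 1)) (axis j 1) y) 0"
    by (simp add: mixed_hess_def pd_def)
  also have "\<dots> = (if k = j then 1 else 0)" unfolding eq by (rule deriv_lin)
  finally show ?thesis .
qed

lemma phC:
  fixes \<psi> :: "real \<Rightarrow> real^'n::finite \<Rightarrow> real"
  assumes sm: "smooth_on ({-e<..<e} \<times> ball 0 e) (Fp \<psi>)"
    and X: "X $ None \<in> {-e<..<e}" and y: "y \<in> ball 0 e"
  shows "G0 (ti_phase \<psi>) X y $ None = 1"
proof -
  let ?M = "mixed_hess (ti_phase \<psi>) X y"
  let ?A = "(\<chi> r c. case c of Some j \<Rightarrow> ?M $ r $ j | None \<Rightarrow> axis None (1::real) $ r) :: real^'n option^'n option"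
  have "G0 (ti_phase \<psi>) X y $ None = det ?A" by (simp add: G0_def wedge_cols_def)
  also have "det ?A = (\<Prod>i\<in>UNIV. ?A $ i $ i)"
  proof (rule det_one_row[where ii=None])
    fix i j :: "'n option" assume ij: "i \<noteq> j" "i \<noteq> None"
    then obtain k where k: "i = Some k" by auto
    show "?A $ i $ j = 0"
    proof (cases j)
      case None then show ?thesis using k by (simp add: axis_def)
    next
      case (Some j')
      then show ?thesis using k ij phB[OF sm X y, of k j'] by simp
    qed
  qed
  also have "\<dots> = 1"
  proof (rule prod.neutral, rule ballI)
    fix i :: "'n option" show "?A $ i $ i = 1"
    proof (cases i)
      case None then show ?thesis by (simp add: axis_def)
    next
      case (Some k) then show ?thesis using phB[OF sm X y, of k k] by simp
    qed
  qed
  finally show ?thesis .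
qed

lemma phD:
  fixes \<psi> :: "real \<Rightarrow> real^'n::finite \<Rightarrow> real"
  assumes sm: "smooth_on ({-e<..<e} \<times> ball 0 e) (Fp \<psi>)"
    and g: "\<forall>X'. X' $ None \<in> {-e<..<e} \<longrightarrow> g X' = a (X' $ None)"
    and X: "X $ None \<in> {-e<..<e}" and y0: "y0 \<in> ball 0 e"
  shows "G0_deriv (ti_phase \<psi>) y0 g X = deriv a (X $ None)"
proof -
  have s: "pd g (axis (Some m) 1) X = 0" for m
  proof -
    have "(\<lambda>s. g (X + s *\<^sub>R axis (Some m) 1)) = (\<lambda>s. a (X $ None))"
      using g X by (auto simp: axis_def)
    then show ?thesis unfolding pd_def by (simp add: DERIV_imp_deriv[OF DERIV_const])
  qed
  have n: "pd g (axis None 1) X = deriv a (X $ None)"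
  proof -
    have ev: "\<forall>\<^sub>F s in nhds 0. X $ None + s *\<^sub>R 1 \<in> {-e<..<e}"
      by (rule ev_line) (use X in auto)
    have "deriv (\<lambda>s. g (X + s *\<^sub>R axis None 1)) 0 = deriv (\<lambda>s. a (X $ None + s)) 0"
    proof (rule deriv_cong_ev)
      show "\<forall>\<^sub>F s in nhds 0. g (X + s *\<^sub>R axis None 1) = a (X $ None + s)"
        using ev by (rule eventually_mono) (use g in \<open>simp add: axis_def\<close>)
    qed simp
    also have "\<dots> = deriv a (X $ None)" by (rule deriv_shift0[symmetric])
    finally show ?thesis unfolding pd_def .
  qed
  show ?thesis
    unfolding G0_deriv_def sum_option s n phC[OF sm X y0] by simp
qed


lemma xt_None[simp]: "xt x t $ None = t" by (simp add: xt_def)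
lemma xt_Some[simp]: "xt x t $ Some j = x $ j" by (simp add: xt_def)

lemma pd_fv_const:
  "pd (\<lambda>y'. c + iter_pd G L (t, y')) (axis i 1) y0 = iter_pd G (fv i # L) (t, y0)"
  by (simp add: pd_def pt_fv deriv_add_const)

lemma phE:
  fixes \<psi> :: "real \<Rightarrow> real^'n::finite \<Rightarrow> real"
  assumes sm: "smooth_on ({-e<..<e} \<times> ball 0 e) (Fp \<psi>)"
    and t: "t \<in> {-e<..<e}" and y0: "y0 \<in> ball 0 e"
    and bc: "bourgain_cond (ti_phase \<psi>) (xt x t) y0"
  shows "\<exists>C. \<forall>i j. iter_pd (Fp \<psi>) [ee, ee, fv i, fv j] (t, y0) = C * iter_pd (Fp \<psi>) [ee, fv i, fv j] (t, y0)"
proof -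
  have key: "G0_deriv (ti_phase \<psi>) y0 (G0_deriv (ti_phase \<psi>) y0
          (\<lambda>X. pd (pd (ti_phase \<psi> X) (axis j 1)) (axis i 1) y0)) (xt x t)
        = iter_pd (Fp \<psi>) [ee, ee, fv i, fv j] (t, y0)"
    and key2: "G0_deriv (ti_phase \<psi>) y0
          (\<lambda>X. pd (pd (ti_phase \<psi> X) (axis j 1)) (axis i 1) y0) (xt x t)
        = iter_pd (Fp \<psi>) [ee, fv i, fv j] (t, y0)" for i j
  proof -
    let ?f = "\<lambda>X. pd (pd (ti_phase \<psi> X) (axis j 1)) (axis i 1) y0"
    have fA: "\<forall>X'::real^'n option. X' $ None \<in> {-e<..<e} \<longrightarrow> ?f X' = (\<lambda>\<tau>. iter_pd (Fp \<psi>) [fv i, fv j] (\<tau>, y0)) (X' $ None)"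
    proof (intro allI impI)
      fix X' :: "real^'n option" assume X': "X' $ None \<in> {-e<..<e}"
      have "?f X' = pd (\<lambda>y'. X' $ Some j + iter_pd (Fp \<psi>) [fv j] (X' $ None, y')) (axis i 1) y0"
        by (rule pd_cong[of "ball 0 e"]) (use y0 phA[OF sm X'] in auto)
      also have "\<dots> = iter_pd (Fp \<psi>) [fv i, fv j] (X' $ None, y0)" by (rule pd_fv_const)
      finally show "?f X' = (\<lambda>\<tau>. iter_pd (Fp \<psi>) [fv i, fv j] (\<tau>, y0)) (X' $ None)" by simp
    qed
    have da: "deriv (\<lambda>\<tau>. iter_pd (Fp \<psi>) L (\<tau>, y0)) = (\<lambda>\<tau>. iter_pd (Fp \<psi>) (ee # L) (\<tau>, y0))" for L
      by (rule ext) (simp only: E1)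
    have g1: "\<forall>X'::real^'n option. X' $ None \<in> {-e<..<e} \<longrightarrow> G0_deriv (ti_phase \<psi>) y0 ?f X' =
        (\<lambda>\<tau>. iter_pd (Fp \<psi>) [ee, fv i, fv j] (\<tau>, y0)) (X' $ None)"
      using phD[OF sm fA _ y0] da[of "[fv i, fv j]"] by auto
    show "G0_deriv (ti_phase \<psi>) y0 (G0_deriv (ti_phase \<psi>) y0 ?f) (xt x t)
        = iter_pd (Fp \<psi>) [ee, ee, fv i, fv j] (t, y0)"
      using phD[OF sm g1 _ y0, of "xt x t"] da[of "[ee, fv i, fv j]"] t by simp
    show "G0_deriv (ti_phase \<psi>) y0 ?f (xt x t) = iter_pd (Fp \<psi>) [ee, fv i, fv j] (t, y0)"
      using g1 t by simp
  qed
  from bc obtain C where C: "\<forall>i j. G0_deriv (ti_phase \<psi>) y0 (G0_deriv (ti_phase \<psi>) y0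
          (\<lambda>X. pd (pd (ti_phase \<psi> X) (axis j 1)) (axis i 1) y0)) (xt x t) =
        C * G0_deriv (ti_phase \<psi>) y0 (\<lambda>X. pd (pd (ti_phase \<psi> X) (axis j 1)) (axis i 1) y0) (xt x t)"
    unfolding bourgain_cond_def Let_def by blast
  show ?thesis using C unfolding key key2 by blast
qed


lemma phF:
  fixes \<psi> :: "real \<Rightarrow> real^'n::finite \<Rightarrow> real"
  assumes sm: "smooth_on ({-e<..<e} \<times> ball 0 e) (Fp \<psi>)"
    and t: "t \<in> {-e<..<e}" and y0: "y0 \<in> ball 0 e"
    and h2: "H2 (ti_phase \<psi>) (xt x t) y0"
  shows "det (\<chi> i j. iter_pd (Fp \<psi>) [fv i, fv j, ee] (t, y0)) \<noteq> 0"
proof -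
  let ?X = "xt x t :: real^'n option"
  let ?L = "(\<chi> j. ?X $ Some j) :: real^'n"
  define gm where "gm m = G0 (ti_phase \<psi>) ?X y0 $ Some m" for m
  have vS: "(\<chi> j. (?X + s *\<^sub>R axis (Some m) 1) $ Some j) = ?L + s *\<^sub>R axis m 1" for s m
    by (simp add: vec_eq_iff axis_def)
  have vN: "(\<chi> j. (?X + s *\<^sub>R axis None 1) $ Some j) = ?L" for s
    by (simp add: vec_eq_iff axis_def)
  have vS': "(\<chi> j. x $ j + s * (if j = m then 1 else 0)) = x + s *\<^sub>R axis m 1" for s m
    by (simp add: vec_eq_iff axis_def)
  have gS: "gradX (ti_phase \<psi>) ?X y'' $ Some m = y'' $ m" for y'' m
  proof -
    have a1: "axis (Some m) (1::real) $ Some j = (if j = m then 1 else 0)" "axis (Some m) (1::real) $ None = 0" for j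
      by (simp_all add: axis_def)
    have "(\<lambda>s. ti_phase \<psi> (?X + s *\<^sub>R axis (Some m) 1) y'') = (\<lambda>s. (?L \<bullet> y'' + \<psi> t y'') + s * y'' $ m)"
      by (rule ext) (simp add: ti_phase_def a1 vS' inner_add_left inner_axis')
    then show ?thesis by (simp add: gradX_def pd_def deriv_lin)
  qed
  have gN: "gradX (ti_phase \<psi>) ?X y'' $ None = iter_pd (Fp \<psi>) [ee] (t, y'')" for y''
  proof -
    have "(\<lambda>s. ti_phase \<psi> (?X + s *\<^sub>R axis None 1) y'') = (\<lambda>s. ?L \<bullet> y'' + \<psi> (t + s) y'')"
      by (rule ext) (simp add: ti_phase_def vN axis_def)
    then have "gradX (ti_phase \<psi>) ?X y'' $ None = deriv (\<lambda>s. \<psi> (t + s) y'') 0"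
      by (simp add: gradX_def pd_def deriv_add_const)
    also have "\<dots> = iter_pd (Fp \<psi>) [ee] (t, y'')"
      by (simp add: pd_def pt_ee)
    finally show ?thesis .
  qed
  define h where "h y'' = iter_pd (Fp \<psi>) [ee] (t, y'') + (\<Sum>m\<in>UNIV. y'' $ m * gm m)" for y''
  have hh: "(\<lambda>y''. gradX (ti_phase \<psi>) ?X y'' \<bullet> G0 (ti_phase \<psi>) ?X y0) = h"
  proof (rule ext)
    fix y''
    show "gradX (ti_phase \<psi>) ?X y'' \<bullet> G0 (ti_phase \<psi>) ?X y0 = h y''"
      unfolding inner_vec_def sum_option h_def gm_def gS gN phC[OF sm _ y0] using t
      by (simp add: phC[OF sm _ y0])
  qed
  have s1: "pd h (axis j 1) y' = gm j + iter_pd (Fp \<psi>) [fv j, ee] (t, y')" if y': "y' \<in> ball 0 e" for j y'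
  proof -
    have sumeq: "(\<Sum>m\<in>UNIV. (y' + s *\<^sub>R axis j 1) $ m * gm m) = (\<Sum>m\<in>UNIV. y' $ m * gm m) + s * gm j" for s
    proof -
      have "(\<Sum>m\<in>UNIV. (y' + s *\<^sub>R axis j 1) $ m * gm m) =
          (\<Sum>m\<in>UNIV. y' $ m * gm m + s * (if m = j then gm m else 0))"
        by (rule sum.cong) (auto simp: axis_def algebra_simps)
      also have "\<dots> = (\<Sum>m\<in>UNIV. y' $ m * gm m) + s * gm j"
        by (simp add: sum.distrib sum_distrib_left[symmetric])
      finally show ?thesis .
    qed
    have eq: "(\<lambda>s. h (y' + s *\<^sub>R axis j 1)) =
        (\<lambda>s. (\<Sum>m\<in>UNIV. y' $ m * gm m) + s * gm j + iter_pd (Fp \<psi>) [ee] ((t, y') + s *\<^sub>R fv j))"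
    proof (rule ext)
      fix s
      have "h (y' + s *\<^sub>R axis j 1) = iter_pd (Fp \<psi>) [ee] (t, y' + s *\<^sub>R axis j 1) +
          ((\<Sum>m\<in>UNIV. y' $ m * gm m) + s * gm j)"
        unfolding h_def sumeq by (rule refl)
      then show "h (y' + s *\<^sub>R axis j 1) =
        (\<Sum>m\<in>UNIV. y' $ m * gm m) + s * gm j + iter_pd (Fp \<psi>) [ee] ((t, y') + s *\<^sub>R fv j)"
        unfolding pt_fv by linarith
    qed
    have d: "(\<lambda>s. iter_pd (Fp \<psi>) [ee] ((t, y') + s *\<^sub>R fv j)) differentiable at 0"
      by (rule smooth_diff[OF sm _ fv_Basis]) (use t y' ee_Basis in auto)
    have "pd h (axis j 1) y' = gm j + deriv (\<lambda>s. iter_pd (Fp \<psi>) [ee] ((t, y') + s *\<^sub>R fv j)) 0"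
      unfolding pd_def eq by (rule deriv_lin_plus[OF d])
    then show ?thesis by (simp add: pd_def)
  qed
  have ent: "pd (\<lambda>y'. pd h (axis j 1) y') (axis i 1) y0 = iter_pd (Fp \<psi>) [fv i, fv j, ee] (t, y0)" for i j
  proof -
    have "pd (\<lambda>y'. pd h (axis j 1) y') (axis i 1) y0 =
        pd (\<lambda>y'. gm j + iter_pd (Fp \<psi>) [fv j, ee] (t, y')) (axis i 1) y0"
      by (rule pd_cong[of "ball 0 e"]) (use y0 s1 in auto)
    also have "\<dots> = iter_pd (Fp \<psi>) [fv i, fv j, ee] (t, y0)" by (rule pd_fv_const)
    finally show ?thesis .
  qed
  have "det (\<chi> i j. pd (\<lambda>y'. pd h (axis j 1) y') (axis i 1) y0) \<noteq> 0"
    using h2 unfolding H2_def hh .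
  then show ?thesis unfolding ent .
qed


lemma core_step2:
  fixes F :: "real \<times> (real^'n::finite) \<Rightarrow> real"
  assumes oS: "open S" and sm: "smooth_on S F" and pS: "p \<in> S"
    and CfP: "\<forall>q\<in>S. \<forall>i j. iter_pd F [ee,ee,fv i,fv j] q = Cf q * iter_pd F [ee,fv i,fv j] q"
    and nz: "iter_pd F [ee,fv ia,fv ja] p \<noteq> 0"
  shows "\<exists>D. ((\<lambda>s. Cf (p + s *\<^sub>R fv k)) has_real_derivative D) (at 0) \<and>
     (\<forall>i j. iter_pd F [fv k,ee,ee,fv i,fv j] p = D * iter_pd F [ee,fv i,fv j] p + Cf p * iter_pd F [fv k,ee,fv i,fv j] p)"
proof -
  have has: "((\<lambda>s. iter_pd F L (p + s *\<^sub>R fv k)) has_real_derivative iter_pd F (fv k # L) p) (at 0)"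
    if "set L \<subseteq> Basis" for L
    by (rule smooth_has[OF sm that fv_Basis pS])
  let ?Dd = "\<lambda>s. iter_pd F [ee,fv ia,fv ja] (p + s *\<^sub>R fv k)"
  let ?N = "\<lambda>s. iter_pd F [ee,ee,fv ia,fv ja] (p + s *\<^sub>R fv k)"
  have hD: "(?Dd has_real_derivative iter_pd F [fv k,ee,fv ia,fv ja] p) (at 0)"
    by (rule has) (simp add: ee_Basis fv_Basis)
  have hN: "(?N has_real_derivative iter_pd F [fv k,ee,ee,fv ia,fv ja] p) (at 0)"
    by (rule has) (simp add: ee_Basis fv_Basis)
  have evS: "\<forall>\<^sub>F s in nhds 0. p + s *\<^sub>R fv k \<in> S" by (rule ev_line[OF oS pS])
  have evD: "\<forall>\<^sub>F s in nhds 0. ?Dd s \<noteq> 0"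
  proof -
    have "(?Dd \<longlongrightarrow> ?Dd 0) (at 0)" using DERIV_isCont[OF hD] by (simp add: isCont_def)
    then have "\<forall>\<^sub>F s in at 0. ?Dd s \<noteq> 0" by (rule tendsto_imp_eventually_ne) (use nz in simp)
    then show ?thesis unfolding eventually_nhds_conv_at using nz by simp
  qed
  define Dq where "Dq = (iter_pd F [fv k,ee,ee,fv ia,fv ja] p * ?Dd 0 - ?N 0 * iter_pd F [fv k,ee,fv ia,fv ja] p) / (?Dd 0 * ?Dd 0)"
  have hq: "((\<lambda>s. ?N s / ?Dd s) has_real_derivative Dq) (at 0)"
    unfolding Dq_def by (rule DERIV_divide[OF hN hD]) (use nz in simp)
  have hC: "((\<lambda>s. Cf (p + s *\<^sub>R fv k)) has_real_derivative Dq) (at 0)"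
  proof -
    have "\<forall>\<^sub>F s in nhds 0. ?N s / ?Dd s = Cf (p + s *\<^sub>R fv k)"
      using evS evD
    proof eventually_elim
      case (elim s)
      then show ?case using CfP by auto
    qed
    then show ?thesis using hq DERIV_cong_ev[of 0 0 "\<lambda>s. ?N s / ?Dd s" "\<lambda>s. Cf (p + s *\<^sub>R fv k)" Dq Dq] by simp
  qed
  have rel: "iter_pd F [fv k,ee,ee,fv i,fv j] p = Dq * iter_pd F [ee,fv i,fv j] p + Cf p * iter_pd F [fv k,ee,fv i,fv j] p"
    for i j
  proof -
    have h1: "((\<lambda>s. iter_pd F [ee,ee,fv i,fv j] (p + s *\<^sub>R fv k)) has_real_derivative iter_pd F [fv k,ee,ee,fv i,fv j] p) (at 0)"
      by (rule has) (simp add: ee_Basis fv_Basis)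
    have h2: "((\<lambda>s. iter_pd F [ee,fv i,fv j] (p + s *\<^sub>R fv k)) has_real_derivative iter_pd F [fv k,ee,fv i,fv j] p) (at 0)"
      by (rule has) (simp add: ee_Basis fv_Basis)
    have h3: "((\<lambda>s. Cf (p + s *\<^sub>R fv k) * iter_pd F [ee,fv i,fv j] (p + s *\<^sub>R fv k)) has_real_derivative
        Dq * iter_pd F [ee,fv i,fv j] p + Cf p * iter_pd F [fv k,ee,fv i,fv j] p) (at 0)"
      using DERIV_mult[OF hC h2] by (simp add: mult.commute)
    have "\<forall>\<^sub>F s in nhds 0. Cf (p + s *\<^sub>R fv k) * iter_pd F [ee,fv i,fv j] (p + s *\<^sub>R fv k) =
        iter_pd F [ee,ee,fv i,fv j] (p + s *\<^sub>R fv k)"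
      using evS by (rule eventually_mono) (use CfP in auto)
    then have h4: "((\<lambda>s. iter_pd F [ee,ee,fv i,fv j] (p + s *\<^sub>R fv k)) has_real_derivative
        Dq * iter_pd F [ee,fv i,fv j] p + Cf p * iter_pd F [fv k,ee,fv i,fv j] p) (at 0)"
      using h3 DERIV_cong_ev[of 0 0 "\<lambda>s. Cf (p + s *\<^sub>R fv k) * iter_pd F [ee,fv i,fv j] (p + s *\<^sub>R fv k)"
          "\<lambda>s. iter_pd F [ee,ee,fv i,fv j] (p + s *\<^sub>R fv k)"] by simp
    show ?thesis by (rule DERIV_unique[OF h1 h4])
  qed
  show ?thesis using hC rel by blast
qed


lemma exists_other:
  assumes "CARD('n::finite) \<ge> 2" shows "\<exists>k::'n. k \<noteq> i"
proof (rule ccontr)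
  assume "\<not> (\<exists>k::'n. k \<noteq> i)"
  then have u: "(UNIV::'n set) = {i}" by auto
  have "CARD('n) = card {i}" by (simp only: u)
  then show False using assms by simp
qed

lemma core_step4:
  fixes F :: "real \<times> (real^'n::finite) \<Rightarrow> real"
  assumes card: "CARD('n) \<ge> 2"
    and oS: "open S" and sm: "smooth_on S F" and pS: "p \<in> S"
    and CfP: "\<forall>q\<in>S. \<forall>i j. iter_pd F [ee,ee,fv i,fv j] q = Cf q * iter_pd F [ee,fv i,fv j] q"
    and dt: "det (\<chi> i j. iter_pd F [ee,fv i,fv j] p) \<noteq> 0"
  shows "((\<lambda>s. Cf (p + s *\<^sub>R fv k)) has_real_derivative 0) (at 0)"
proof -
  let ?A = "\<lambda>i j. iter_pd F [ee,fv i,fv j] p"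
  have sw: "\<And>L1 u v L2. u \<in> Basis \<Longrightarrow> v \<in> Basis \<Longrightarrow> set L1 \<subseteq> Basis \<Longrightarrow> set L2 \<subseteq> Basis \<Longrightarrow>
      iter_pd F (L1 @ v # u # L2) p = iter_pd F (L1 @ u # v # L2) p"
    by (rule smooth_swap[OF oS sm _ pS]) auto
  have n3: "iter_pd F [fv a, ee, ee, fv b, fv j] p = iter_pd F [ee, ee, fv a, fv b, fv j] p" for a b j
  proof -
    have "iter_pd F [fv a, ee, ee, fv b, fv j] p = iter_pd F [ee, fv a, ee, fv b, fv j] p"
      using sw[of ee "fv a" "[]" "[ee, fv b, fv j]"] by (simp add: ee_Basis fv_Basis)
    also have "\<dots> = iter_pd F [ee, ee, fv a, fv b, fv j] p"
      using sw[of ee "fv a" "[ee]" "[fv b, fv j]"] by (simp add: ee_Basis fv_Basis)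
    finally show ?thesis .
  qed
  have n2: "iter_pd F [fv a, ee, fv b, fv j] p = iter_pd F [ee, fv a, fv b, fv j] p" for a b j
    using sw[of ee "fv a" "[]" "[fv b, fv j]"] by (simp add: ee_Basis fv_Basis)
  have c3: "iter_pd F [ee, ee, fv a, fv b, fv j] p = iter_pd F [ee, ee, fv b, fv a, fv j] p" for a b j
    using sw[of "fv b" "fv a" "[ee, ee]" "[fv j]"] by (simp add: ee_Basis fv_Basis)
  have c2: "iter_pd F [ee, fv a, fv b, fv j] p = iter_pd F [ee, fv b, fv a, fv j] p" for a b j
    using sw[of "fv b" "fv a" "[ee]" "[fv j]"] by (simp add: ee_Basis fv_Basis)
  obtain ia ja where nz: "?A ia ja \<noteq> 0"
  proof -
    have "\<exists>ia ja. ?A ia ja \<noteq> 0"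
    proof (rule ccontr)
      assume "\<not> (\<exists>ia ja. ?A ia ja \<noteq> 0)"
      then have "row i (\<chi> i j. ?A i j) = 0" for i by (simp add: row_def vec_eq_iff)
      then have "det (\<chi> i j. ?A i j) = 0" by (rule det_zero_row)
      then show False using dt by simp
    qed
    then show ?thesis using that by blast
  qed
  have "\<forall>k. \<exists>D. ((\<lambda>s. Cf (p + s *\<^sub>R fv k)) has_real_derivative D) (at 0) \<and>
     (\<forall>i j. iter_pd F [fv k,ee,ee,fv i,fv j] p = D * ?A i j + Cf p * iter_pd F [fv k,ee,fv i,fv j] p)"
    using core_step2[OF oS sm pS CfP nz] by blast
  then obtain Df where Df: "\<And>k. ((\<lambda>s. Cf (p + s *\<^sub>R fv k)) has_real_derivative Df k) (at 0)"
    "\<And>k i j. iter_pd F [fv k,ee,ee,fv i,fv j] p = Df k * ?A i j + Cf p * iter_pd F [fv k,ee,fv i,fv j] p"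
    by metis
  have rel: "Df k * ?A i j = Df i * ?A k j" for i j k
  proof -
    have "iter_pd F [fv k,ee,ee,fv i,fv j] p = iter_pd F [fv i,ee,ee,fv k,fv j] p"
      unfolding n3 using c3 by simp
    moreover have "iter_pd F [fv k,ee,fv i,fv j] p = iter_pd F [fv i,ee,fv k,fv j] p"
      unfolding n2 using c2 by simp
    ultimately show ?thesis using Df(2)[of k i j] Df(2)[of i k j] by simp
  qed
  have D0: "Df i = 0" for i
  proof (rule ccontr)
    assume Di: "Df i \<noteq> 0"
    obtain k where k: "k \<noteq> i" using exists_other[OF card] by blast
    have "det (\<chi> i j. ?A i j) = 0"
    proof (rule det_dep_rows[of i k])
      fix j show "(\<chi> i j. ?A i j) $ k $ j = (Df k / Df i) * (\<chi> i j. ?A i j) $ i $ j"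
        using rel[of k i j] Di by (simp add: field_simps)
    qed (use k in auto)
    then show False using dt by simp
  qed
  show ?thesis using Df(1)[of k] D0[of k] by simp
qed


lemma sm1_basic:
  fixes F :: "real \<times> (real^'n::finite) \<Rightarrow> real"
  assumes sm: "smooth_on ({-e<..<e} \<times> ball 0 e) F" and epos: "e > 0" and L: "set L \<subseteq> Basis"
  shows "sm1 {-e<..<e} (\<lambda>t. iter_pd F L (t, 0))"
proof -
  have dn: "(deriv ^^ n) (\<lambda>t. iter_pd F L (t, 0)) = (\<lambda>t. iter_pd F (replicate n ee @ L) (t, 0))" for n
  proof (induction n)
    case 0 then show ?case by simp
  next
    case (Suc n)
    have "(deriv ^^ Suc n) (\<lambda>t. iter_pd F L (t, 0)) = deriv ((deriv ^^ n) (\<lambda>t. iter_pd F L (t, 0)))" by simp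
    also have "\<dots> = deriv (\<lambda>t. iter_pd F (replicate n ee @ L) (t, 0))" by (simp only: Suc)
    also have "\<dots> = (\<lambda>t. iter_pd F (ee # (replicate n ee @ L)) (t, 0))" by (rule ext) (simp only: E1)
    finally show ?case by simp
  qed
  show ?thesis unfolding sm1_def Dn_def
  proof (intro allI impI ballI)
    fix n k t assume t: "t \<in> {-e<..<e}"
    have "(\<lambda>s. iter_pd F (replicate k ee @ L) ((t, 0) + s *\<^sub>R ee)) differentiable at 0"
      by (rule smooth_diff[OF sm _ ee_Basis]) (use L t epos ee_Basis in auto)
    then have "(\<lambda>s. iter_pd F (replicate k ee @ L) (t + s, 0)) differentiable at 0" by (simp add: pt_ee)
    then show "(deriv ^^ k) (\<lambda>t. iter_pd F L (t, 0)) differentiable at t"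
      unfolding dn by (simp add: diff_shift0[of "\<lambda>t. iter_pd F (replicate k ee @ L) (t, 0)"])
  qed
qed

lemma core:
  fixes F :: "real \<times> (real^'n::finite) \<Rightarrow> real" and e :: real
  assumes card: "CARD('n) \<ge> 2" and epos: "e > 0"
    and sm: "smooth_on ({-e<..<e} \<times> ball 0 e) F"
    and h2: "\<forall>t\<in>{-e<..<e}. \<forall>y\<in>ball 0 e. det (\<chi> i j. iter_pd F [ee,fv i,fv j] (t,y)) \<noteq> 0"
    and bc: "\<forall>t\<in>{-e<..<e}. \<forall>y\<in>ball 0 e. \<exists>C. \<forall>i j.
               iter_pd F [ee,ee,fv i,fv j] (t,y) = C * iter_pd F [ee,fv i,fv j] (t,y)"
  shows "\<exists>c. sm1 {-e<..<e} c \<and> (\<forall>t\<in>{-e<..<e}. \<forall>y\<in>ball 0 e. \<forall>j.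
           iter_pd F [ee,ee,fv j] (t,y) - c t * iter_pd F [ee,fv j] (t,y)
         = iter_pd F [ee,ee,fv j] (t,0) - c t * iter_pd F [ee,fv j] (t,0))"
proof -
  define I where "I = {-e<..<e}"
  define S where "S = I \<times> ball (0::real^'n) e"
  have oI: "open I" unfolding I_def by simp
  have oS: "open S" unfolding S_def I_def by (simp add: open_Times)
  have smS: "smooth_on S F" using sm unfolding S_def I_def .
  have inS: "(t, y) \<in> S \<longleftrightarrow> t \<in> I \<and> y \<in> ball 0 e" for t y unfolding S_def by simp
  have zS: "(t, 0) \<in> S" if "t \<in> I" for t using that epos by (simp add: inS)
  define Cf where "Cf q = (SOME C. \<forall>i j. iter_pd F [ee,ee,fv i,fv j] q = C * iter_pd F [ee,fv i,fv j] q)" for q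
  have CfP: "\<forall>q\<in>S. \<forall>i j. iter_pd F [ee,ee,fv i,fv j] q = Cf q * iter_pd F [ee,fv i,fv j] q"
  proof
    fix q assume q: "q \<in> S"
    then obtain t y where qq: "q = (t, y)" "t \<in> I" "y \<in> ball 0 e" unfolding S_def by auto
    then have "\<exists>C. \<forall>i j. iter_pd F [ee,ee,fv i,fv j] q = C * iter_pd F [ee,fv i,fv j] q"
      using bc unfolding I_def by auto
    then show "\<forall>i j. iter_pd F [ee,ee,fv i,fv j] q = Cf q * iter_pd F [ee,fv i,fv j] q"
      unfolding Cf_def by (rule someI_ex)
  qed
  have cst: "Cf (t, y) = Cf (t, 0)" if t: "t \<in> I" and y: "y \<in> ball 0 e" for t y
  proof -
    have "\<forall>y\<in>ball 0 e. \<forall>k. ((\<lambda>s. Cf (t, y + s *\<^sub>R axis k 1)) has_real_derivative 0) (at 0)"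
    proof (intro ballI allI)
      fix y :: "real^'n" and k assume y: "y \<in> ball 0 e"
      have "det (\<chi> i j. iter_pd F [ee,fv i,fv j] (t, y)) \<noteq> 0" using h2 t y unfolding I_def by auto
      from core_step4[OF card oS smS _ CfP this, of k] t y
      show "((\<lambda>s. Cf (t, y + s *\<^sub>R axis k 1)) has_real_derivative 0) (at 0)"
        by (simp add: inS pt_fv)
    qed
    from const_ball[OF this] y show ?thesis by simp
  qed
  define c where "c t = Cf (t, 0)" for t
  have cP: "iter_pd F [ee,ee,fv i,fv j] (t,y) = c t * iter_pd F [ee,fv i,fv j] (t,y)"
    if "t \<in> I" "y \<in> ball 0 e" for t y i j
    using CfP cst[OF that] that unfolding c_def by (simp add: inS)
  have wc: "iter_pd F [ee,ee,fv j] (t,y) - c t * iter_pd F [ee,fv j] (t,y)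
         = iter_pd F [ee,ee,fv j] (t,0) - c t * iter_pd F [ee,fv j] (t,0)"
    if t: "t \<in> I" and y: "y \<in> ball 0 e" for t y j
  proof -
    have "\<forall>y\<in>ball 0 e. \<forall>k. ((\<lambda>s. iter_pd F [ee,ee,fv j] (t, y + s *\<^sub>R axis k 1)
        - c t * iter_pd F [ee,fv j] (t, y + s *\<^sub>R axis k 1)) has_real_derivative 0) (at 0)"
    proof (intro ballI allI)
      fix y :: "real^'n" and k assume y: "y \<in> ball 0 e"
      have p: "(t, y) \<in> S" using t y by (simp add: inS)
      have sw: "\<And>L1 u v L2. u \<in> Basis \<Longrightarrow> v \<in> Basis \<Longrightarrow> set L1 \<subseteq> Basis \<Longrightarrow> set L2 \<subseteq> Basis \<Longrightarrow>
          iter_pd F (L1 @ v # u # L2) (t, y) = iter_pd F (L1 @ u # v # L2) (t, y)"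
        by (rule smooth_swap[OF oS smS _ p]) auto
      have a1: "iter_pd F [fv k, ee, ee, fv j] (t, y) = iter_pd F [ee, ee, fv k, fv j] (t, y)"
      proof -
        have "iter_pd F [fv k, ee, ee, fv j] (t, y) = iter_pd F [ee, fv k, ee, fv j] (t, y)"
          using sw[of ee "fv k" "[]" "[ee, fv j]"] by (simp add: ee_Basis fv_Basis)
        also have "\<dots> = iter_pd F [ee, ee, fv k, fv j] (t, y)"
          using sw[of ee "fv k" "[ee]" "[fv j]"] by (simp add: ee_Basis fv_Basis)
        finally show ?thesis .
      qed
      have a2: "iter_pd F [fv k, ee, fv j] (t, y) = iter_pd F [ee, fv k, fv j] (t, y)"
        using sw[of ee "fv k" "[]" "[fv j]"] by (simp add: ee_Basis fv_Basis)
      have h1: "((\<lambda>s. iter_pd F [ee,ee,fv j] ((t, y) + s *\<^sub>R fv k)) has_real_derivative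
          iter_pd F [fv k,ee,ee,fv j] (t, y)) (at 0)"
        by (rule smooth_has[OF smS _ fv_Basis p]) (simp add: ee_Basis fv_Basis)
      have h2: "((\<lambda>s. iter_pd F [ee,fv j] ((t, y) + s *\<^sub>R fv k)) has_real_derivative
          iter_pd F [fv k,ee,fv j] (t, y)) (at 0)"
        by (rule smooth_has[OF smS _ fv_Basis p]) (simp add: ee_Basis fv_Basis)
      have "((\<lambda>s. iter_pd F [ee,ee,fv j] ((t, y) + s *\<^sub>R fv k) - c t * iter_pd F [ee,fv j] ((t, y) + s *\<^sub>R fv k))
          has_real_derivative iter_pd F [fv k,ee,ee,fv j] (t, y) - c t * iter_pd F [fv k,ee,fv j] (t, y)) (at 0)"
        by (rule DERIV_diff[OF h1 DERIV_cmult[OF h2]])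
      moreover have "iter_pd F [fv k,ee,ee,fv j] (t, y) - c t * iter_pd F [fv k,ee,fv j] (t, y) = 0"
        unfolding a1 a2 using cP[OF t y, of k j] by simp
      ultimately show "((\<lambda>s. iter_pd F [ee,ee,fv j] (t, y + s *\<^sub>R axis k 1)
        - c t * iter_pd F [ee,fv j] (t, y + s *\<^sub>R axis k 1)) has_real_derivative 0) (at 0)"
        by (simp add: pt_fv)
    qed
    from const_ball[OF this] y show ?thesis by simp
  qed
  have sc: "sm1 I c"
  proof -
    let ?A = "\<lambda>t i j. iter_pd F [ee,fv i,fv j] (t, 0)"
    let ?B = "\<lambda>t i j. iter_pd F [ee,ee,fv i,fv j] (t, 0)"
    define Num where "Num t = (\<Sum>i\<in>UNIV. \<Sum>j\<in>UNIV. ?B t i j * ?A t i j)" for t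
    define Den where "Den t = (\<Sum>i\<in>UNIV. \<Sum>j\<in>UNIV. ?A t i j * ?A t i j)" for t
    have bA: "sm1 I (\<lambda>t. ?A t i j)" for i j
      unfolding I_def by (rule sm1_basic[OF sm epos]) (simp add: ee_Basis fv_Basis)
    have bB: "sm1 I (\<lambda>t. ?B t i j)" for i j
      unfolding I_def by (rule sm1_basic[OF sm epos]) (simp add: ee_Basis fv_Basis)
    have sN: "sm1 I Num" unfolding Num_def
      by (intro sm1_sum[OF oI] sm1_mult[OF oI] bA bB) simp_all
    have sD: "sm1 I Den" unfolding Den_def
      by (intro sm1_sum[OF oI] sm1_mult[OF oI] bA) simp_all
    have Dnz: "Den t \<noteq> 0" if t: "t \<in> I" for t
    proof
      assume D0: "Den t = 0"
      have "(\<Sum>j\<in>UNIV. ?A t i j * ?A t i j) = 0" for i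
        using D0 unfolding Den_def
        by (subst (asm) sum_nonneg_eq_0_iff) (auto intro: sum_nonneg)
      then have "?A t i j * ?A t i j = 0" for i j
        by (subst (asm) sum_nonneg_eq_0_iff) auto
      then have "row i (\<chi> i j. ?A t i j) = 0" for i by (simp add: row_def vec_eq_iff)
      then have "det (\<chi> i j. ?A t i j) = 0" by (rule det_zero_row)
      then show False using h2 t epos unfolding I_def by auto
    qed
    have ceq: "Num t * inverse (Den t) = c t" if t: "t \<in> I" for t
    proof -
      have "Num t = c t * Den t"
        unfolding Num_def Den_def using cP[OF t, of 0] epos
        by (simp add: sum_distrib_left mult.assoc)
      then show ?thesis using Dnz[OF t] by simp
    qed
    have sND: "sm1 I (\<lambda>t. Num t * inverse (Den t))"
      by (rule sm1_mult[OF oI sN sm1_inverse[OF oI Dnz sD]])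
    show ?thesis by (rule sm1_cong[OF oI _ sND]) (rule ceq)
  qed
  show ?thesis using sc wc unfolding I_def by blast
qed

theorem mainTheorem11:
  fixes \<psi> :: "real \<Rightarrow> real^'n::finite \<Rightarrow> real"
    and \<epsilon>0 :: real
  assumes d3: "CARD('n) \<ge> 2"
    and eps: "\<epsilon>0 > 0"
    and smooth: "smooth_on ({-\<epsilon>0<..<\<epsilon>0} \<times> ball 0 \<epsilon>0) (\<lambda>(t, y). \<psi> t y)"
    and psi0: "\<forall>y\<in>ball 0 \<epsilon>0. \<psi> 0 y = 0"
    and hyp1: "\<forall>x\<in>ball 0 \<epsilon>0. \<forall>t\<in>{-\<epsilon>0<..<\<epsilon>0}. \<forall>y\<in>ball 0 \<epsilon>0.
                 H1 (ti_phase \<psi>) (xt x t) y"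
    and hyp2: "\<forall>x\<in>ball 0 \<epsilon>0. \<forall>t\<in>{-\<epsilon>0<..<\<epsilon>0}. \<forall>y0\<in>ball 0 \<epsilon>0.
                 H2 (ti_phase \<psi>) (xt x t) y0"
    and bourgain: "\<forall>x\<in>ball 0 \<epsilon>0. \<forall>t\<in>{-\<epsilon>0<..<\<epsilon>0}. \<forall>y0\<in>ball 0 \<epsilon>0.
                 bourgain_cond (ti_phase \<psi>) (xt x t) y0"
  shows "\<exists>(c :: real \<Rightarrow> real) (B :: real \<Rightarrow> real^'n).
           smooth_on {-\<epsilon>0<..<\<epsilon>0} c \<and>
           (\<forall>j. smooth_on {-\<epsilon>0<..<\<epsilon>0} (\<lambda>t. B t $ j)) \<and>
           (let \<psi>' = (\<lambda>t y. B t \<bullet> y + \<psi> t y) in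
              (\<forall>x t y. ti_phase \<psi> (xt (x + B t) t) y = x \<bullet> y + \<psi>' t y) \<and>
              (\<forall>t\<in>{-\<epsilon>0<..<\<epsilon>0}. \<forall>y\<in>ball 0 \<epsilon>0. \<forall>j.
                 deriv (deriv (\<lambda>s. pd (\<lambda>y'. \<psi>' s y') (axis j 1) y)) t
                   = c t * deriv (\<lambda>s. pd (\<lambda>y'. \<psi>' s y') (axis j 1) y) t))"
proof -
  define I where "I = {-\<epsilon>0<..<\<epsilon>0}"
  define F where "F = Fp \<psi>"
  have oI: "open I" unfolding I_def by simp
  have smF: "smooth_on ({-\<epsilon>0<..<\<epsilon>0} \<times> ball 0 \<epsilon>0) F" using smooth unfolding F_def Fp_def .
  have smP: "smooth_on ({-\<epsilon>0<..<\<epsilon>0} \<times> ball 0 \<epsilon>0) (Fp \<psi>)" using smooth unfolding Fp_def .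
  have z0: "(0::real^'n) \<in> ball 0 \<epsilon>0" using eps by simp
  have h2': "\<forall>t\<in>{-\<epsilon>0<..<\<epsilon>0}. \<forall>y\<in>ball 0 \<epsilon>0. det (\<chi> i j. iter_pd F [ee,fv i,fv j] (t,y)) \<noteq> 0"
  proof (intro ballI)
    fix t y assume t: "t \<in> {-\<epsilon>0<..<\<epsilon>0}" and y: "y \<in> ball (0::real^'n) \<epsilon>0"
    have p: "(t, y) \<in> {-\<epsilon>0<..<\<epsilon>0} \<times> ball 0 \<epsilon>0" using t y by simp
    have sw: "\<And>L1 u v L2. u \<in> Basis \<Longrightarrow> v \<in> Basis \<Longrightarrow> set L1 \<subseteq> Basis \<Longrightarrow> set L2 \<subseteq> Basis \<Longrightarrow>
        iter_pd F (L1 @ v # u # L2) (t, y) = iter_pd F (L1 @ u # v # L2) (t, y)"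
      by (rule smooth_swap[OF _ smF _ p]) (auto simp: open_Times)
    have e: "iter_pd F [fv i, fv j, ee] (t, y) = iter_pd F [ee, fv i, fv j] (t, y)" for i j
    proof -
      have "iter_pd F [fv i, fv j, ee] (t, y) = iter_pd F [fv i, ee, fv j] (t, y)"
        using sw[of "fv j" ee "[fv i]" "[]"] by (simp add: ee_Basis fv_Basis)
      also have "\<dots> = iter_pd F [ee, fv i, fv j] (t, y)"
        using sw[of "fv i" ee "[]" "[fv j]"] by (simp add: ee_Basis fv_Basis)
      finally show ?thesis .
    qed
    have "det (\<chi> i j. iter_pd (Fp \<psi>) [fv i, fv j, ee] (t, y)) \<noteq> 0"
      by (rule phF[OF smP t y]) (use hyp2 z0 t y in blast)
    then show "det (\<chi> i j. iter_pd F [ee,fv i,fv j] (t,y)) \<noteq> 0" unfolding F_def[symmetric] e .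
  qed
  have bc': "\<forall>t\<in>{-\<epsilon>0<..<\<epsilon>0}. \<forall>y\<in>ball 0 \<epsilon>0. \<exists>C. \<forall>i j.
               iter_pd F [ee,ee,fv i,fv j] (t,y) = C * iter_pd F [ee,fv i,fv j] (t,y)"
  proof (intro ballI)
    fix t y assume t: "t \<in> {-\<epsilon>0<..<\<epsilon>0}" and y: "y \<in> ball (0::real^'n) \<epsilon>0"
    show "\<exists>C. \<forall>i j. iter_pd F [ee,ee,fv i,fv j] (t,y) = C * iter_pd F [ee,fv i,fv j] (t,y)"
      unfolding F_def by (rule phE[OF smP t y]) (use bourgain z0 t y in blast)
  qed
  obtain c where sc: "sm1 {-\<epsilon>0<..<\<epsilon>0} c" and wc: "\<forall>t\<in>{-\<epsilon>0<..<\<epsilon>0}. \<forall>y\<in>ball 0 \<epsilon>0. \<forall>j.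
           iter_pd F [ee,ee,fv j] (t,y) - c t * iter_pd F [ee,fv j] (t,y)
         = iter_pd F [ee,ee,fv j] (t,0) - c t * iter_pd F [ee,fv j] (t,0)"
    using core[OF d3 eps smF h2' bc'] by blast
  define g where "g j t = iter_pd F [ee,ee,fv j] (t,0) - c t * iter_pd F [ee,fv j] (t,0)" for j t
  have sg: "sm1 {-\<epsilon>0<..<\<epsilon>0} (g j)" for j
  proof -
    have b1: "sm1 {-\<epsilon>0<..<\<epsilon>0} (\<lambda>t. iter_pd F [ee,ee,fv j] (t,0))"
      by (rule sm1_basic[OF smF eps]) (simp add: ee_Basis fv_Basis)
    have b2: "sm1 {-\<epsilon>0<..<\<epsilon>0} (\<lambda>t. iter_pd F [ee,fv j] (t,0))"
      by (rule sm1_basic[OF smF eps]) (simp add: ee_Basis fv_Basis)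
    have "sm1 {-\<epsilon>0<..<\<epsilon>0} (\<lambda>t. iter_pd F [ee,ee,fv j] (t,0) - c t * iter_pd F [ee,fv j] (t,0))"
      by (rule sm1_diff[OF _ b1 sm1_mult[OF _ sc b2]]) simp_all
    then show ?thesis unfolding g_def by (simp add: fun_eq_iff)
  qed
  have "\<forall>j. \<exists>Bu. sm1 {-\<epsilon>0<..<\<epsilon>0} (fst Bu) \<and> (\<forall>t\<in>{-\<epsilon>0<..<\<epsilon>0}. (fst Bu has_real_derivative snd Bu t) (at t)) \<and>
           (\<forall>t\<in>{-\<epsilon>0<..<\<epsilon>0}. (snd Bu has_real_derivative c t * snd Bu t - g j t) (at t))"
  proof
    fix j
    obtain B u where "sm1 {-\<epsilon>0<..<\<epsilon>0} B" "\<forall>t\<in>{-\<epsilon>0<..<\<epsilon>0}. (B has_real_derivative u t) (at t)"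
           "\<forall>t\<in>{-\<epsilon>0<..<\<epsilon>0}. (u has_real_derivative c t * u t - g j t) (at t)"
      using ode_solve[OF sc sg[of j]] by blast
    then show "\<exists>Bu. sm1 {-\<epsilon>0<..<\<epsilon>0} (fst Bu) \<and> (\<forall>t\<in>{-\<epsilon>0<..<\<epsilon>0}. (fst Bu has_real_derivative snd Bu t) (at t)) \<and>
           (\<forall>t\<in>{-\<epsilon>0<..<\<epsilon>0}. (snd Bu has_real_derivative c t * snd Bu t - g j t) (at t))"
      by (intro exI[of _ "(B, u)"]) simp
  qed
  then obtain Bu where Bu: "\<And>j. sm1 {-\<epsilon>0<..<\<epsilon>0} (fst (Bu j))"
    "\<And>j t. t \<in> {-\<epsilon>0<..<\<epsilon>0} \<Longrightarrow> (fst (Bu j) has_real_derivative snd (Bu j) t) (at t)"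
    "\<And>j t. t \<in> {-\<epsilon>0<..<\<epsilon>0} \<Longrightarrow> (snd (Bu j) has_real_derivative c t * snd (Bu j) t - g j t) (at t)"
    by metis
  define Bf where "Bf j = fst (Bu j)" for j
  define uf where "uf j = snd (Bu j)" for j
  have BfD: "(Bf j has_real_derivative uf j t) (at t)" if "t \<in> {-\<epsilon>0<..<\<epsilon>0}" for j t
    using Bu(2)[OF that] unfolding Bf_def uf_def .
  have ufD: "(uf j has_real_derivative c t * uf j t - g j t) (at t)" if "t \<in> {-\<epsilon>0<..<\<epsilon>0}" for j t
    using Bu(3)[OF that] unfolding uf_def .
  define B where "B t = (\<chi> j. Bf j t)" for t
  have part1: "\<forall>x t y. ti_phase \<psi> (xt (x + B t) t) y = x \<bullet> y + (B t \<bullet> y + \<psi> t y)"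
  proof (intro allI)
    fix x t y
    have "(\<chi> j. xt (x + B t) t $ Some j) = x + B t" by (simp add: vec_eq_iff)
    then show "ti_phase \<psi> (xt (x + B t) t) y = x \<bullet> y + (B t \<bullet> y + \<psi> t y)"
      by (simp add: ti_phase_def inner_add_left)
  qed
  have part2: "deriv (deriv (\<lambda>s. pd (\<lambda>y'. B s \<bullet> y' + \<psi> s y') (axis j 1) y)) t
      = c t * deriv (\<lambda>s. pd (\<lambda>y'. B s \<bullet> y' + \<psi> s y') (axis j 1) y) t"
    if t: "t \<in> {-\<epsilon>0<..<\<epsilon>0}" and y: "y \<in> ball 0 \<epsilon>0" for t y j
  proof -
    let ?Q = "\<lambda>s. pd (\<lambda>y'. B s \<bullet> y' + \<psi> s y') (axis j 1) y"
    let ?R = "\<lambda>s. Bf j s + iter_pd F [fv j] (s, y)"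
    let ?R1 = "\<lambda>s. uf j s + iter_pd F [ee, fv j] (s, y)"
    have pS: "(s, y) \<in> {-\<epsilon>0<..<\<epsilon>0} \<times> ball 0 \<epsilon>0" if "s \<in> {-\<epsilon>0<..<\<epsilon>0}" for s
      using that y by simp
    have QR: "?Q s = ?R s" if s: "s \<in> {-\<epsilon>0<..<\<epsilon>0}" for s
    proof -
      have eq: "(\<lambda>r. B s \<bullet> (y + r *\<^sub>R axis j 1) + \<psi> s (y + r *\<^sub>R axis j 1)) =
          (\<lambda>r. B s \<bullet> y + r * Bf j s + F ((s, y) + r *\<^sub>R fv j))"
        by (rule ext) (simp add: inner_add_right inner_axis pt_fv B_def F_def)
      have "(\<lambda>r. iter_pd F [] ((s, y) + r *\<^sub>R fv j)) differentiable at 0"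
        by (rule smooth_diff[OF smF _ fv_Basis pS[OF s]]) simp
      then have d: "(\<lambda>r. F ((s, y) + r *\<^sub>R fv j)) differentiable at 0" by simp
      have "?Q s = deriv (\<lambda>r. B s \<bullet> (y + r *\<^sub>R axis j 1) + \<psi> s (y + r *\<^sub>R axis j 1)) 0"
        by (simp add: pd_def)
      also have "\<dots> = Bf j s + deriv (\<lambda>r. F ((s, y) + r *\<^sub>R fv j)) 0"
        unfolding eq by (rule deriv_lin_plus[OF d])
      finally show ?thesis by (simp add: pd_def)
    qed
    have hF: "((\<lambda>s. iter_pd F L (s, y)) has_real_derivative iter_pd F (ee # L) (s, y)) (at s)"
      if "s \<in> {-\<epsilon>0<..<\<epsilon>0}" "set L \<subseteq> Basis" for s L
      by (rule t_line, rule smooth_has[OF smF that(2) ee_Basis pS[OF that(1)]])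
    have dR: "(?R has_real_derivative ?R1 s) (at s)" if "s \<in> {-\<epsilon>0<..<\<epsilon>0}" for s
      by (rule DERIV_add[OF BfD[OF that] hF[OF that]]) (simp add: fv_Basis)
    have dQ: "deriv ?Q s = ?R1 s" if s: "s \<in> {-\<epsilon>0<..<\<epsilon>0}" for s
    proof -
      have "deriv ?Q s = deriv ?R s"
      proof (rule deriv_cong_ev)
        have "\<forall>\<^sub>F x in nhds s. x \<in> {-\<epsilon>0<..<\<epsilon>0}" by (rule eventually_nhds_in_open) (use s in auto)
        then show "\<forall>\<^sub>F x in nhds s. ?Q x = ?R x" by (rule eventually_mono) (use QR in auto)
      qed simp
      also have "\<dots> = ?R1 s" by (rule DERIV_imp_deriv[OF dR[OF s]])
      finally show ?thesis .
    qed
    have "deriv (deriv ?Q) t = deriv ?R1 t"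
    proof (rule deriv_cong_ev)
      have "\<forall>\<^sub>F x in nhds t. x \<in> {-\<epsilon>0<..<\<epsilon>0}" by (rule eventually_nhds_in_open) (use t in auto)
      then show "\<forall>\<^sub>F x in nhds t. deriv ?Q x = ?R1 x" by (rule eventually_mono) (use dQ in auto)
    qed simp
    also have "\<dots> = (c t * uf j t - g j t) + iter_pd F [ee, ee, fv j] (t, y)"
      by (rule DERIV_imp_deriv, rule DERIV_add[OF ufD[OF t] hF[OF t]]) (simp add: ee_Basis fv_Basis)
    also have "\<dots> = c t * ?R1 t"
      using wc t y unfolding g_def by (auto simp: algebra_simps)
    also have "?R1 t = deriv ?Q t" using dQ[OF t] by simp
    finally show ?thesis .
  qed
  show ?thesis
  proof (intro exI conjI)
    show "smooth_on {-\<epsilon>0<..<\<epsilon>0} c" by (rule sm1_smooth[OF sc])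
    show "\<forall>j. smooth_on {-\<epsilon>0<..<\<epsilon>0} (\<lambda>t. B t $ j)"
      using Bu(1) unfolding B_def Bf_def by (simp add: sm1_smooth)
    show "let \<psi>' = \<lambda>t y. B t \<bullet> y + \<psi> t y in
       (\<forall>x t y. ti_phase \<psi> (xt (x + B t) t) y = x \<bullet> y + \<psi>' t y) \<and>
       (\<forall>t\<in>{- \<epsilon>0<..<\<epsilon>0}. \<forall>y\<in>ball 0 \<epsilon>0. \<forall>j.
           deriv (deriv (\<lambda>s. pd (\<psi>' s) (axis j 1) y)) t = c t * deriv (\<lambda>s. pd (\<psi>' s) (axis j 1) y) t)"
      unfolding Let_def using part1 part2 by simp
  qed
qed

end
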